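(* Let $a<b$, integers $1\le p\le n$, $P_1=P_1^T\in\mathbb{R}^{n\times n}$ invertible, $P_0=-P_0^T\in\mathbb{R}^{n\times n}$, $\mathcal{X}=L^2([a,b];\mathbb{R}^n)$, $Z$ a real Hilbert space, $H\in\mathcal{L}(Z,\mathcal{X})$, $\delta t>0$ fixed, and $\mathcal{J}e=P_1\frac{de}{d\zeta}+P_0e$ for $e\in H^1([a,b];\mathbb{R}^n)$. Let $\mathcal{D}^A$ be the set of all $(\delta f_\varepsilon,\delta f_w,\delta f_\partial,e_\varepsilon,e_w,e_\partial)\in(\mathcal{X}\times Z\times\mathbb{R}^n)^2$ with $e_\varepsilon\in H^1([a,b];\mathbb{R}^n)$, $\delta f_\varepsilon=\mathcal{J}e_\varepsilon\delta t+H\delta f_w$, $\delta f_\partial=\frac{1}{\sqrt2}P_1(e_\varepsilon(b)-e_\varepsilon(a))\delta t$, $e_\partial=\frac{1}{\sqrt2}(e_\varepsilon(b)+e_\varepsilon(a))$, $e_w=H^*e_\varepsilon$, where the boundary ports are split as $\delta f_\partial=(\delta f_{\partial,n-p},f_p)$, $e_\partial=(e_{\partial,n-p},e_p)$ with $\delta f_{\partial,n-p},e_{\partial,n-p}\in\mathbb{R}^{n-p}$ and $f_p,e_p\in\mathbb{R}^p$. Let $\mathcal{F}_3,\mathcal{E}_3$ be real Hilbert spaces, $j_3:\mathcal{F}_3\to\mathcal{E}_3$ a unitary invertible linear map, and let $\mathcal{D}^B\subset(\mathcal{F}_3\times\mathbb{R}^p)\times(\mathcal{E}_3\times\mathbb{R}^p)$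 be a Dirac structure with respect to the pairing $\langle(f^B,f,e^B,e),(\tilde f^B,\tilde f,\tilde e^B,\tilde e)\rangle=\langle f^B,j_3^{-1}\tilde e^B\rangle+\langle e^B,j_3\tilde f^B\rangle-\langle f,\tilde e\rangle-\langle e,\tilde f\rangle$. Define the composition $\mathcal{D}^A\circ\mathcal{D}^B$ as the set of all $(\delta f^A,f^B,e^A,e^B)$ with $\delta f^A=(\delta f_\varepsilon,\delta f_w,\delta f_{\partial,n-p})$, $e^A=(e_\varepsilon,e_w,e_{\partial,n-p})$, $f^B\in\mathcal{F}_3$, $e^B\in\mathcal{E}_3$, for which there exist $f_p,e_p\in\mathbb{R}^p$ with $(\delta f^A,f_p,e^A,e_p)\in\mathcal{D}^A$ and $(f^B,-f_p,e^B,e_p)\in\mathcal{D}^B$. Then $\mathcal{D}^A\circ\mathcal{D}^B$ is a (split) Dirac structure in $(\mathcal{X}\times Z\times\mathbb{R}^{n-p}\times\mathcal{F}_3)\times(\mathcal{X}\times Z\times\mathbb{R}^{n-p}\times\mathcal{E}_3)$ with respect to the pairing $$\langle\mathfrak{d},\tilde{\mathfrak{d}}\rangle_\dagger=\langle\delta f_\varepsilon,\tilde e_\varepsilon\rangle-\langle\delta f_w,\tilde e_w\rangle-\langle\delta f_{\partial,n-p},\tilde e_{\partial,n-p}\rangle+\langle f^B,j_3^{-1}\tilde e^B\rangle+\langle e_\varepsilon,\delta\tilde f_\varepsilon\rangle-\langle e_w,\delta\tilde f_w\rangle-\langle e_{\partial,n-p},\delta\tilde f_{\partial,n-p}\rangle+\langle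 e^B,j_3\tilde f^B\rangle,$$ i.e. $(\mathcal{D}^A\circ\mathcal{D}^B)^\perp=\mathcal{D}^A\circ\mathcal{D}^B$ with the orthogonal complement taken with respect to $\langle\cdot,\cdot\rangle_\dagger$.
   Context: Inner products on $\mathcal{X}$ are the standard $L^2$ ones and $H^*$ is the $L^2$-adjoint of $H$. A Dirac structure with respect to a symmetric bilinear pairing on a bond space is a linear subspace equal to its orthogonal complement with respect to that pairing; "split" means the pairing has the form $\langle f,j^{-1}\tilde e\rangle+\langle e,j\tilde f\rangle$ with $j$ block-diagonal, here $j=\mathrm{diag}(j_1,j_3)$, $j_1=\mathrm{diag}(I_\mathcal{X},-I_Z,-I_{\mathbb{R}^{n-p}})$. $\mathcal{D}^A$ is the stochastic port-Hamiltonian Dirac structure; the interconnection with $\mathcal{D}^B$ is through the $p$ boundary ports $f_p,e_p$ (with $j_2=-I_{\mathbb{R}^p}$ on that part). *)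

theory Defs
  imports "HOL-Analysis.Analysis"
begin

text \<open>Vectors of R^k are modelled as functions nat => real vanishing at indices >= k;
 n x n matrices as nat => nat => real (only entries with indices < n matter).\<close>

definition Rvec :: "nat \<Rightarrow> (nat \<Rightarrow> real) set" where
  "Rvec k = {v. \<forall>i. k \<le> i \<longrightarrow> v i = 0}"

definition dotk :: "nat \<Rightarrow> (nat \<Rightarrow> real) \<Rightarrow> (nat \<Rightarrow> real) \<Rightarrow> real" where
  "dotk k u v = (\<Sum>i<k. u i * v i)"

definition mv :: "nat \<Rightarrow> (nat \<Rightarrow> nat \<Rightarrow> real) \<Rightarrow> (nat \<Rightarrow> real) \<Rightarrow> (nat \<Rightarrow> real)" where
  "mv n M v = (\<lambda>i. if i < n then (\<Sum>j<n. M i j * v j) else 0)"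

definition sym_mat :: "nat \<Rightarrow> (nat \<Rightarrow> nat \<Rightarrow> real) \<Rightarrow> bool" where
  "sym_mat n M \<longleftrightarrow> (\<forall>i<n. \<forall>j<n. M i j = M j i)"

definition skew_mat :: "nat \<Rightarrow> (nat \<Rightarrow> nat \<Rightarrow> real) \<Rightarrow> bool" where
  "skew_mat n M \<longleftrightarrow> (\<forall>i<n. \<forall>j<n. M i j = - M j i)"

definition invertible_mat :: "nat \<Rightarrow> (nat \<Rightarrow> nat \<Rightarrow> real) \<Rightarrow> bool" where
  "invertible_mat n M \<longleftrightarrow> (\<exists>Q. \<forall>i<n. \<forall>j<n.
      (\<Sum>k<n. M i k * Q k j) = (if i = j then 1 else 0) \<and>
      (\<Sum>k<n. Q i k * M k j) = (if i = j then 1 else 0))"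

definition L2 :: "real \<Rightarrow> real \<Rightarrow> nat \<Rightarrow> (real \<Rightarrow> nat \<Rightarrow> real) set" where
  "L2 a b n = {f. (\<forall>x i. n \<le> i \<longrightarrow> f x i = 0) \<and>
      (\<forall>i<n. set_borel_measurable lborel {a..b} (\<lambda>x. f x i) \<and>
             set_integrable lborel {a..b} (\<lambda>x. (f x i)\<^sup>2))}"

definition L2ip :: "real \<Rightarrow> real \<Rightarrow> nat \<Rightarrow> (real \<Rightarrow> nat \<Rightarrow> real) \<Rightarrow> (real \<Rightarrow> nat \<Rightarrow> real) \<Rightarrow> real" where
  "L2ip a b n f g = (LINT x:{a..b}|lborel. (\<Sum>i<n. f x i * g x i))"

text \<open>e is in H^1([a,b];R^n) with absolutely continuous representative c and weak
 derivative g (g in L^2): c x = c a + int_a^x g on [a,b], and e = c a.e. on [a,b].\<close>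
definition H1rep :: "real \<Rightarrow> real \<Rightarrow> nat \<Rightarrow> (real \<Rightarrow> nat \<Rightarrow> real) \<Rightarrow> (real \<Rightarrow> nat \<Rightarrow> real)
     \<Rightarrow> (real \<Rightarrow> nat \<Rightarrow> real) \<Rightarrow> bool" where
  "H1rep a b n e c g \<longleftrightarrow> e \<in> L2 a b n \<and> g \<in> L2 a b n \<and>
     (\<forall>x i. n \<le> i \<longrightarrow> c x i = 0) \<and>
     (\<forall>x\<in>{a..b}. \<forall>i<n. c x i = c a i + (LINT t:{a..x}|lborel. g t i)) \<and>
     (AE x in lborel. x \<in> {a..b} \<longrightarrow> e x = c x)"

definition bounded_L2_map :: "real \<Rightarrow> real \<Rightarrow> nat \<Rightarrow> ('z::real_normed_vector \<Rightarrow> real \<Rightarrow> nat \<Rightarrow> real) \<Rightarrow> bool" where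
  "bounded_L2_map a b n H \<longleftrightarrow> (\<forall>z. H z \<in> L2 a b n) \<and>
     (\<forall>z1 z2. AE x in lborel. x \<in> {a..b} \<longrightarrow> H (z1 + z2) x = (\<lambda>i. H z1 x i + H z2 x i)) \<and>
     (\<forall>r z. AE x in lborel. x \<in> {a..b} \<longrightarrow> H (r *\<^sub>R z) x = (\<lambda>i. r * H z x i)) \<and>
     (\<exists>K. \<forall>z. L2ip a b n (H z) (H z) \<le> K * (norm z)\<^sup>2)"

definition is_adjoint :: "real \<Rightarrow> real \<Rightarrow> nat \<Rightarrow> ('z::real_inner \<Rightarrow> real \<Rightarrow> nat \<Rightarrow> real)
     \<Rightarrow> ((real \<Rightarrow> nat \<Rightarrow> real) \<Rightarrow> 'z) \<Rightarrow> bool" where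
  "is_adjoint a b n H Hs \<longleftrightarrow> (\<forall>z. \<forall>f\<in>L2 a b n. inner z (Hs f) = L2ip a b n (H z) f)"

definition orth :: "'d set \<Rightarrow> ('d \<Rightarrow> 'd \<Rightarrow> real) \<Rightarrow> 'd set \<Rightarrow> 'd set" where
  "orth B pair D = {y \<in> B. \<forall>x\<in>D. pair x y = 0}"

definition dirac :: "'d set \<Rightarrow> ('d \<Rightarrow> 'd \<Rightarrow> real) \<Rightarrow> 'd set \<Rightarrow> bool" where
  "dirac B pair D \<longleftrightarrow> D \<subseteq> B \<and> orth B pair D = D"

definition DA :: "real \<Rightarrow> real \<Rightarrow> nat \<Rightarrow> real \<Rightarrow> (nat \<Rightarrow> nat \<Rightarrow> real) \<Rightarrow> (nat \<Rightarrow> nat \<Rightarrow> real)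
    \<Rightarrow> ('z::real_inner \<Rightarrow> real \<Rightarrow> nat \<Rightarrow> real) \<Rightarrow> ((real \<Rightarrow> nat \<Rightarrow> real) \<Rightarrow> 'z)
    \<Rightarrow> (((real \<Rightarrow> nat \<Rightarrow> real) \<times> 'z \<times> (nat \<Rightarrow> real)) \<times> ((real \<Rightarrow> nat \<Rightarrow> real) \<times> 'z \<times> (nat \<Rightarrow> real))) set" where
  "DA a b n dt P1 P0 H Hs = {((dfe, dfw, dfd), (ee, ew, ed)).
     dfe \<in> L2 a b n \<and> ee \<in> L2 a b n \<and> dfd \<in> Rvec n \<and> ed \<in> Rvec n \<and>
     (\<exists>c g. H1rep a b n ee c g \<and>
        (AE x in lborel. x \<in> {a..b} \<longrightarrow>
           dfe x = (\<lambda>i. (mv n P1 (g x) i + mv n P0 (ee x) i) * dt + H dfw x i)) \<and>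
        dfd = (\<lambda>i. (1 / sqrt 2) * mv n P1 (\<lambda>k. c b k - c a k) i * dt) \<and>
        ed = (\<lambda>i. (1 / sqrt 2) * (c b i + c a i)) \<and>
        ew = Hs ee)}"

definition join :: "nat \<Rightarrow> nat \<Rightarrow> (nat \<Rightarrow> real) \<Rightarrow> (nat \<Rightarrow> real) \<Rightarrow> (nat \<Rightarrow> real)" where
  "join n p u v = (\<lambda>i. if i < n - p then u i else if i < n then v (i - (n - p)) else 0)"

definition bondB :: "nat \<Rightarrow> (('f \<times> (nat \<Rightarrow> real)) \<times> ('e \<times> (nat \<Rightarrow> real))) set" where
  "bondB p = {((fB, f), (eB, e)). f \<in> Rvec p \<and> e \<in> Rvec p}"

definition pairB :: "nat \<Rightarrow> ('f::real_inner \<Rightarrow> 'e::real_inner)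
    \<Rightarrow> (('f \<times> (nat \<Rightarrow> real)) \<times> ('e \<times> (nat \<Rightarrow> real)))
    \<Rightarrow> (('f \<times> (nat \<Rightarrow> real)) \<times> ('e \<times> (nat \<Rightarrow> real))) \<Rightarrow> real" where
  "pairB p j3 = (\<lambda>((fB, f), (eB, e)) ((fB', f'), (eB', e')).
      inner fB (inv j3 eB') + inner eB (j3 fB') - dotk p f e' - dotk p e f')"

definition compAB :: "real \<Rightarrow> real \<Rightarrow> nat \<Rightarrow> nat \<Rightarrow> real \<Rightarrow> (nat \<Rightarrow> nat \<Rightarrow> real) \<Rightarrow> (nat \<Rightarrow> nat \<Rightarrow> real)
    \<Rightarrow> ('z::real_inner \<Rightarrow> real \<Rightarrow> nat \<Rightarrow> real) \<Rightarrow> ((real \<Rightarrow> nat \<Rightarrow> real) \<Rightarrow> 'z)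
    \<Rightarrow> (('f \<times> (nat \<Rightarrow> real)) \<times> ('e \<times> (nat \<Rightarrow> real))) set
    \<Rightarrow> (((real \<Rightarrow> nat \<Rightarrow> real) \<times> 'z \<times> (nat \<Rightarrow> real) \<times> 'f) \<times>
        ((real \<Rightarrow> nat \<Rightarrow> real) \<times> 'z \<times> (nat \<Rightarrow> real) \<times> 'e)) set" where
  "compAB a b n p dt P1 P0 H Hs DB = {((dfe, dfw, dfnp, fB), (ee, ew, enp, eB)).
     dfnp \<in> Rvec (n - p) \<and> enp \<in> Rvec (n - p) \<and>
     (\<exists>fp ep. fp \<in> Rvec p \<and> ep \<in> Rvec p \<and>
        ((dfe, dfw, join n p dfnp fp), (ee, ew, join n p enp ep)) \<in> DA a b n dt P1 P0 H Hs \<and>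
        ((fB, (\<lambda>i. - fp i)), (eB, ep)) \<in> DB)}"

definition bondC :: "real \<Rightarrow> real \<Rightarrow> nat \<Rightarrow> nat \<Rightarrow>
    (((real \<Rightarrow> nat \<Rightarrow> real) \<times> 'z \<times> (nat \<Rightarrow> real) \<times> 'f) \<times>
     ((real \<Rightarrow> nat \<Rightarrow> real) \<times> 'z \<times> (nat \<Rightarrow> real) \<times> 'e)) set" where
  "bondC a b n p = {((dfe, dfw, dfnp, fB), (ee, ew, enp, eB)).
      dfe \<in> L2 a b n \<and> dfnp \<in> Rvec (n - p) \<and> ee \<in> L2 a b n \<and> enp \<in> Rvec (n - p)}"

definition pairC :: "real \<Rightarrow> real \<Rightarrow> nat \<Rightarrow> nat \<Rightarrow> ('f::real_inner \<Rightarrow> 'e::real_inner) \<Rightarrow>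
    (((real \<Rightarrow> nat \<Rightarrow> real) \<times> 'z::real_inner \<times> (nat \<Rightarrow> real) \<times> 'f) \<times>
     ((real \<Rightarrow> nat \<Rightarrow> real) \<times> 'z \<times> (nat \<Rightarrow> real) \<times> 'e)) \<Rightarrow>
    (((real \<Rightarrow> nat \<Rightarrow> real) \<times> 'z \<times> (nat \<Rightarrow> real) \<times> 'f) \<times>
     ((real \<Rightarrow> nat \<Rightarrow> real) \<times> 'z \<times> (nat \<Rightarrow> real) \<times> 'e)) \<Rightarrow> real" where
  "pairC a b n p j3 = (\<lambda>((dfe, dfw, dfnp, fB), (ee, ew, enp, eB)) ((dfe', dfw', dfnp', fB'), (ee', ew', enp', eB')).
      L2ip a b n dfe ee' - inner dfw ew' - dotk (n - p) dfnp enp' + inner fB (inv j3 eB')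
    + L2ip a b n ee dfe' - inner ew dfw' - dotk (n - p) enp dfnp' + inner eB (j3 fB'))"

end

theory Submission
  imports Defs
begin



abbreviation NN :: "real \<Rightarrow> real \<Rightarrow> real measure" where
  "NN a b \<equiv> restrict_space lborel {a..b}"

lemma NN_finite: "finite_measure (NN a b)"
  by (rule finite_measureI) (simp add: emeasure_restrict_space space_restrict_space emeasure_lborel_Icc_eq)

lemma sbm_iff: "set_borel_measurable lborel {a..b} (f::real\<Rightarrow>real) \<longleftrightarrow> f \<in> borel_measurable (NN a b)"
  unfolding set_borel_measurable_def
  by (rule borel_measurable_restrict_space_iff[symmetric]) auto

lemma si_iff: "set_integrable lborel {a..b} (f::real\<Rightarrow>real) \<longleftrightarrow> integrable (NN a b) f"
  by (subst set_integrable_eq) auto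

lemma sl_eq: "(LINT x:{a..b}|lborel. (f::real\<Rightarrow>real) x) = integral\<^sup>L (NN a b) f"
  unfolding set_lebesgue_integral_def by (subst integral_restrict_space) auto

definition sq :: "real measure \<Rightarrow> (real \<Rightarrow> real) \<Rightarrow> bool" where
  "sq M f \<longleftrightarrow> f \<in> borel_measurable M \<and> integrable M (\<lambda>x. (f x)\<^sup>2)"

lemma sq_int:
  assumes "finite_measure M" "sq M f" shows "integrable M f"
proof -
  interpret finite_measure M by fact
  have "integrable M (\<lambda>x. 1 + (f x)\<^sup>2)" using assms(2) unfolding sq_def by auto
  then show ?thesis
  proof (rule Bochner_Integration.integrable_bound)
    show "f \<in> borel_measurable M" using assms(2) unfolding sq_def by auto
    show "AE x in M. norm (f x) \<le> norm (1 + (f x)\<^sup>2)"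
    proof (rule AE_I2)
      fix x
      have "0 \<le> (\<bar>f x\<bar> - 1)\<^sup>2" by simp
      then have "\<bar>f x\<bar> \<le> 1 + (f x)\<^sup>2"
        unfolding power2_diff power2_abs by simp
      then show "norm (f x) \<le> norm (1 + (f x)\<^sup>2)" by simp
    qed
  qed
qed

lemma sq_prod:
  assumes "sq M f" "sq M g" shows "integrable M (\<lambda>x. f x * g x)"
proof -
  have "integrable M (\<lambda>x. (f x)\<^sup>2 + (g x)\<^sup>2)" using assms unfolding sq_def by auto
  then show ?thesis
  proof (rule Bochner_Integration.integrable_bound)
    show "(\<lambda>x. f x * g x) \<in> borel_measurable M" using assms unfolding sq_def by auto
    show "AE x in M. norm (f x * g x) \<le> norm ((f x)\<^sup>2 + (g x)\<^sup>2)"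
    proof (rule AE_I2)
      fix x
      have "0 \<le> (\<bar>f x\<bar> - \<bar>g x\<bar>)\<^sup>2" by simp
      then have "2 * \<bar>f x\<bar> * \<bar>g x\<bar> \<le> (f x)\<^sup>2 + (g x)\<^sup>2"
        unfolding power2_diff power2_abs by linarith
      moreover have "0 \<le> \<bar>f x\<bar> * \<bar>g x\<bar>" by simp
      moreover have "norm (f x * g x) = \<bar>f x\<bar> * \<bar>g x\<bar>" by (simp add: abs_mult)
      moreover have "norm ((f x)\<^sup>2 + (g x)\<^sup>2) = (f x)\<^sup>2 + (g x)\<^sup>2" by simp
      ultimately show "norm (f x * g x) \<le> norm ((f x)\<^sup>2 + (g x)\<^sup>2)"
        by linarith
    qed
  qed
qed

lemma sq_add:
  assumes "sq M f" "sq M g" shows "sq M (\<lambda>x. f x + g x)"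
proof -
  have "integrable M (\<lambda>x. (f x)\<^sup>2 + (g x)\<^sup>2 + 2 * (f x * g x))"
    using assms sq_prod[OF assms] unfolding sq_def by auto
  then have "integrable M (\<lambda>x. (f x + g x)\<^sup>2)"
    by (simp add: power2_sum add.commute add.left_commute mult.assoc)
  then show ?thesis using assms unfolding sq_def by auto
qed

lemma sq_scale:
  assumes "sq M f" shows "sq M (\<lambda>x. r * f x)"
  using assms unfolding sq_def by (auto simp: power_mult_distrib)

lemma sq_zero: "sq M (\<lambda>x. 0)"
  unfolding sq_def by auto

lemma sq_sum:
  assumes "\<And>j. j \<in> J \<Longrightarrow> sq M (f j)" shows "sq M (\<lambda>x. \<Sum>j\<in>J. f j x)"
  using assms
proof (induction J rule: infinite_finite_induct)
  case (insert j J) then show ?case by (simp add: sq_add)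
qed (auto simp: sq_zero)

lemma sq_diff:
  assumes "sq M f" "sq M g" shows "sq M (\<lambda>x. f x - g x)"
  using sq_add[OF assms(1) sq_scale[OF assms(2), of "-1"]] by simp

lemma sq_bounded:
  assumes "finite_measure M" "f \<in> borel_measurable M" "\<And>x. \<bar>f x\<bar> \<le> B"
  shows "sq M f"
proof -
  interpret finite_measure M by fact
  have "integrable M (\<lambda>x. B\<^sup>2)" by simp
  then have "integrable M (\<lambda>x. (f x)\<^sup>2)"
  proof (rule Bochner_Integration.integrable_bound)
    show "(\<lambda>x. (f x)\<^sup>2) \<in> borel_measurable M" using assms by auto
    show "AE x in M. norm ((f x)\<^sup>2) \<le> norm (B\<^sup>2)"
    proof (rule AE_I2)
      fix x
      have "\<bar>f x\<bar>\<^sup>2 \<le> B\<^sup>2" by (rule power_mono[OF assms(3) abs_ge_zero])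
      then show "norm ((f x)\<^sup>2) \<le> norm (B\<^sup>2)" by simp
    qed
  qed
  then show ?thesis using assms unfolding sq_def by auto
qed

lemma sq_cont:
  assumes "continuous_on {a..b} f" shows "sq (NN a b) f"
proof -
  have "bounded (f ` {a..b})"
    using compact_imp_bounded[OF compact_continuous_image[OF assms compact_Icc]] .
  then obtain B where "\<forall>y\<in>f ` {a..b}. norm y \<le> B" unfolding bounded_iff by blast
  then have B: "\<And>x. x \<in> {a..b} \<Longrightarrow> norm (f x) \<le> B" by blast
  define h where "h x = (if x \<in> {a..b} then f x else 0)" for x
  have "h \<in> borel_measurable (NN a b)"
  proof -
    have "f \<in> borel_measurable (restrict_space borel {a..b})"
      by (rule borel_measurable_continuous_on_restrict[OF assms])
    then have "f \<in> borel_measurable (NN a b)"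
      by (subst measurable_cong_sets[OF sets_restrict_space_cong[OF sets_lborel] refl])
    moreover have "\<And>x. x \<in> space (NN a b) \<Longrightarrow> f x = h x"
      by (auto simp: h_def space_restrict_space)
    ultimately show ?thesis using measurable_cong by blast
  qed
  then have "sq (NN a b) h"
    by (rule sq_bounded[OF NN_finite, where B="max B 0"]) (use B in \<open>auto simp: h_def le_max_iff_disj\<close>)
  moreover have "\<And>x. x \<in> space (NN a b) \<Longrightarrow> f x = h x"
    by (auto simp: h_def space_restrict_space)
  ultimately show ?thesis unfolding sq_def
    by (metis (no_types, lifting) Bochner_Integration.integrable_cong measurable_cong)
qed



lemma indef_cont:
  fixes g :: "real \<Rightarrow> real"
  assumes "set_integrable lborel {a..b} g"
  shows "continuous_on {a..b} (\<lambda>x. LINT t:{a..x}|lborel. g t)"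
proof -
  have gi: "g integrable_on {a..b}" using set_borel_integral_eq_integral(1)[OF assms] .
  have "continuous_on {a..b} (\<lambda>x. integral {a..x} g)" by (rule indefinite_integral_continuous_1[OF gi])
  moreover have "\<And>x. x \<in> {a..b} \<Longrightarrow> (LINT t:{a..x}|lborel. g t) = integral {a..x} g"
    by (rule set_borel_integral_eq_integral(2)) (rule set_integrable_subset[OF assms], auto)
  ultimately show ?thesis by (metis (no_types, lifting) continuous_on_eq)
qed



lemma ibp:
  fixes g1 g2 :: "real \<Rightarrow> real"
  assumes i1: "set_integrable lborel {a..b} g1" and i2: "set_integrable lborel {a..b} g2"
  shows "set_integrable lborel {a..b} (\<lambda>x. g1 x * (LINT t:{a..x}|lborel. g2 t))"
    and "set_integrable lborel {a..b} (\<lambda>x. (LINT t:{a..x}|lborel. g1 t) * g2 x)"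
    and "(LINT x:{a..b}|lborel. g1 x * (LINT t:{a..x}|lborel. g2 t))
         + (LINT x:{a..b}|lborel. (LINT t:{a..x}|lborel. g1 t) * g2 x)
         = (LINT t:{a..b}|lborel. g1 t) * (LINT t:{a..b}|lborel. g2 t)"
proof -
  define G1 where "G1 x = indicator {a..b} x * g1 x" for x
  define G2 where "G2 x = indicator {a..b} x * g2 x" for x
  define C1 where "C1 x = (LINT t:{a..x}|lborel. g1 t)" for x
  define C2 where "C2 x = (LINT t:{a..x}|lborel. g2 t)" for x
  have I1: "integrable lborel G1" using i1 unfolding set_integrable_def G1_def by simp
  have I2: "integrable lborel G2" using i2 unfolding set_integrable_def G2_def by simp
  have m1[measurable]: "G1 \<in> borel_measurable lborel" using I1 by auto
  have m2[measurable]: "G2 \<in> borel_measurable lborel" using I2 by auto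
  have P: "integrable (lborel \<Otimes>\<^sub>M lborel) (\<lambda>(x,y). G1 x * G2 y)"
  proof (rule lborel_pair.Fubini_integrable)
    show "(\<lambda>(x,y). G1 x * G2 y) \<in> borel_measurable (lborel \<Otimes>\<^sub>M lborel)" by measurable
    have "(\<lambda>x. \<integral>y. norm (case (x, y) of (x, y) \<Rightarrow> G1 x * G2 y) \<partial>lborel)
        = (\<lambda>x. \<bar>G1 x\<bar> * (\<integral>y. \<bar>G2 y\<bar> \<partial>lborel))"
      by (simp add: abs_mult)
    moreover have "integrable lborel (\<lambda>x. \<bar>G1 x\<bar> * (\<integral>y. \<bar>G2 y\<bar> \<partial>lborel))"
      using I1 by auto
    ultimately show "integrable lborel (\<lambda>x. \<integral>y. norm (case (x, y) of (x, y) \<Rightarrow> G1 x * G2 y) \<partial>lborel)"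
      by simp
    show "AE x in lborel. integrable lborel (\<lambda>y. case (x, y) of (x, y) \<Rightarrow> G1 x * G2 y)"
      using I2 by auto
  qed
  define f1 where "f1 x y = G1 x * (if y \<le> x then G2 y else 0)" for x y :: real
  define f2 where "f2 x y = G2 y * (if x < y then G1 x else 0)" for x y :: real
  have F1: "integrable (lborel \<Otimes>\<^sub>M lborel) (case_prod f1)"
  proof (rule Bochner_Integration.integrable_bound[OF P])
    show "case_prod f1 \<in> borel_measurable (lborel \<Otimes>\<^sub>M lborel)"
      unfolding f1_def by measurable
    show "AE x in lborel \<Otimes>\<^sub>M lborel. norm (case_prod f1 x) \<le> norm (case x of (x, y) \<Rightarrow> G1 x * G2 y)"
      by (auto simp: f1_def abs_mult)
  qed
  have F2: "integrable (lborel \<Otimes>\<^sub>M lborel) (case_prod f2)"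
  proof (rule Bochner_Integration.integrable_bound[OF P])
    show "case_prod f2 \<in> borel_measurable (lborel \<Otimes>\<^sub>M lborel)"
      unfolding f2_def by measurable
    show "AE x in lborel \<Otimes>\<^sub>M lborel. norm (case_prod f2 x) \<le> norm (case x of (x, y) \<Rightarrow> G1 x * G2 y)"
      by (auto simp: f2_def abs_mult)
  qed
  have e1: "(\<integral>y. f1 x y \<partial>lborel) = indicator {a..b} x * (g1 x * C2 x)" for x
  proof (cases "x \<in> {a..b}")
    case True
    have "(\<lambda>y. if y \<le> x then G2 y else 0) = (\<lambda>y. indicator {a..x} y *\<^sub>R g2 y)"
      using True by (auto simp: G2_def indicator_def fun_eq_iff)
    then have "(\<integral>y. (if y \<le> x then G2 y else 0) \<partial>lborel) = C2 x"
      unfolding C2_def set_lebesgue_integral_def by simp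
    then show ?thesis using True
      by (simp add: f1_def G1_def)
  qed (simp add: f1_def G1_def)
  have e2: "(\<integral>x. f2 x y \<partial>lborel) = indicator {a..b} y * (C1 y * g2 y)" for y
  proof (cases "y \<in> {a..b}")
    case True
    have "(\<integral>x. (if x < y then G1 x else 0) \<partial>lborel) = (\<integral>x. indicator {a..y} x *\<^sub>R g1 x \<partial>lborel)"
    proof (rule integral_cong_AE)
      show "(\<lambda>x. if x < y then G1 x else 0) \<in> borel_measurable lborel" by measurable
      show "(\<lambda>x. indicator {a..y} x *\<^sub>R g1 x) \<in> borel_measurable lborel"
        using set_integrable_subset[OF i1, of "{a..y}"] True unfolding set_integrable_def by auto
      show "AE x in lborel. (if x < y then G1 x else 0) = indicator {a..y} x *\<^sub>R g1 x"
        using AE_lborel_singleton[of y] by eventually_elim (use True in \<open>auto simp: G1_def indicator_def\<close>)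
    qed
    then show ?thesis using True
      by (simp add: f2_def C1_def set_lebesgue_integral_def G2_def mult_ac)
  qed (simp add: f2_def G2_def)
  have sum: "(\<lambda>(x,y). G1 x * G2 y) = (\<lambda>z. case_prod f1 z + case_prod f2 z)"
    by (auto simp: f1_def f2_def fun_eq_iff)
  have "integral\<^sup>L (lborel \<Otimes>\<^sub>M lborel) (\<lambda>(x,y). G1 x * G2 y) = (\<integral>x. (\<integral>y. G1 x * G2 y \<partial>lborel) \<partial>lborel)"
    using lborel_pair.integral_fst[of "\<lambda>x y. G1 x * G2 y"] P by simp
  also have "\<dots> = (\<integral>x. G1 x \<partial>lborel) * (\<integral>y. G2 y \<partial>lborel)" by simp
  also have "\<dots> = C1 b * C2 b"
    by (simp add: C1_def C2_def set_lebesgue_integral_def G1_def G2_def)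
  finally have tot: "integral\<^sup>L (lborel \<Otimes>\<^sub>M lborel) (\<lambda>(x,y). G1 x * G2 y) = C1 b * C2 b" .
  have "integral\<^sup>L (lborel \<Otimes>\<^sub>M lborel) (\<lambda>(x,y). G1 x * G2 y)
      = integral\<^sup>L (lborel \<Otimes>\<^sub>M lborel) (case_prod f1) + integral\<^sup>L (lborel \<Otimes>\<^sub>M lborel) (case_prod f2)"
    unfolding sum by (rule Bochner_Integration.integral_add[OF F1 F2])
  also have "integral\<^sup>L (lborel \<Otimes>\<^sub>M lborel) (case_prod f1) = (\<integral>x. (\<integral>y. f1 x y \<partial>lborel) \<partial>lborel)"
    using lborel_pair.integral_fst[OF F1] by simp
  also have "integral\<^sup>L (lborel \<Otimes>\<^sub>M lborel) (case_prod f2) = (\<integral>y. (\<integral>x. f2 x y \<partial>lborel) \<partial>lborel)"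
    using lborel_pair.integral_snd[OF F2] by simp
  finally have main: "(\<integral>x. (\<integral>y. f1 x y \<partial>lborel) \<partial>lborel) + (\<integral>y. (\<integral>x. f2 x y \<partial>lborel) \<partial>lborel) = C1 b * C2 b"
    using tot by simp
  have int1: "integrable lborel (\<lambda>x. \<integral>y. f1 x y \<partial>lborel)" using lborel_pair.integrable_fst[OF F1] .
  have int2: "integrable lborel (\<lambda>y. \<integral>x. f2 x y \<partial>lborel)" using lborel_pair.integrable_snd[OF F2] .
  show "set_integrable lborel {a..b} (\<lambda>x. g1 x * (LINT t:{a..x}|lborel. g2 t))"
    using int1 unfolding e1 set_integrable_def C2_def by simp
  show "set_integrable lborel {a..b} (\<lambda>x. (LINT t:{a..x}|lborel. g1 t) * g2 x)"
    using int2 unfolding e2 set_integrable_def C1_def by simp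
  show "(LINT x:{a..b}|lborel. g1 x * (LINT t:{a..x}|lborel. g2 t))
         + (LINT x:{a..b}|lborel. (LINT t:{a..x}|lborel. g1 t) * g2 x)
         = (LINT t:{a..b}|lborel. g1 t) * (LINT t:{a..b}|lborel. g2 t)"
    using main unfolding e1 e2 set_lebesgue_integral_def C1_def C2_def by simp
qed




lemma AE_NN_iff: "(AE x in NN a b. P x) \<longleftrightarrow> (AE x in lborel. x \<in> {a..b} \<longrightarrow> P x)"
  by (rule AE_restrict_space_iff) auto

lemma space_NN[simp]: "space (NN a b) = {a..b}"
  by (simp add: space_restrict_space)

lemma L2_iff: "f \<in> L2 a b n \<longleftrightarrow> (\<forall>x i. n \<le> i \<longrightarrow> f x i = 0) \<and> (\<forall>i<n. sq (NN a b) (\<lambda>x. f x i))"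
  unfolding L2_def sq_def by (simp add: sbm_iff si_iff)

lemma L2ip_eq: "L2ip a b n f g = integral\<^sup>L (NN a b) (\<lambda>x. \<Sum>i<n. f x i * g x i)"
  unfolding L2ip_def by (rule sl_eq)

lemma L2ip_int: "f \<in> L2 a b n \<Longrightarrow> g \<in> L2 a b n \<Longrightarrow> integrable (NN a b) (\<lambda>x. \<Sum>i<n. f x i * g x i)"
  by (auto simp: L2_iff intro!: Bochner_Integration.integrable_sum sq_prod)

lemma L2ip_comm: "L2ip a b n f g = L2ip a b n g f"
  by (simp add: L2ip_def mult.commute)

lemma L2ip_add1:
  assumes "f \<in> L2 a b n" "g \<in> L2 a b n" "h \<in> L2 a b n"
  shows "L2ip a b n (\<lambda>x i. f x i + g x i) h = L2ip a b n f h + L2ip a b n g h"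
proof -
  have "(\<lambda>x. \<Sum>i<n. (f x i + g x i) * h x i) = (\<lambda>x. (\<Sum>i<n. f x i * h x i) + (\<Sum>i<n. g x i * h x i))"
    by (simp add: distrib_right sum.distrib)
  then show ?thesis unfolding L2ip_eq
    using Bochner_Integration.integral_add[OF L2ip_int[OF assms(1,3)] L2ip_int[OF assms(2,3)]] by simp
qed

lemma L2ip_scale1: "L2ip a b n (\<lambda>x i. r * f x i) h = r * L2ip a b n f h"
  unfolding L2ip_def by (simp add: mult.assoc flip: sum_distrib_left)

lemma L2ip_cong1:
  assumes "\<And>x i. x \<in> {a..b} \<Longrightarrow> i < n \<Longrightarrow> f x i = f' x i"
  shows "L2ip a b n f h = L2ip a b n f' h"
  unfolding L2ip_eq by (rule Bochner_Integration.integral_cong) (auto simp: assms)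

lemma L2ip_congAE1:
  assumes "f \<in> L2 a b n" "f' \<in> L2 a b n" "h \<in> L2 a b n" "AE x in NN a b. \<forall>i<n. f x i = f' x i"
  shows "L2ip a b n f h = L2ip a b n f' h"
  unfolding L2ip_eq
proof (rule integral_cong_AE)
  show "(\<lambda>x. \<Sum>i<n. f x i * h x i) \<in> borel_measurable (NN a b)" using L2ip_int[OF assms(1,3)] by auto
  show "(\<lambda>x. \<Sum>i<n. f' x i * h x i) \<in> borel_measurable (NN a b)" using L2ip_int[OF assms(2,3)] by auto
  show "AE x in NN a b. (\<Sum>i<n. f x i * h x i) = (\<Sum>i<n. f' x i * h x i)"
    using assms(4) by eventually_elim simp
qed

lemma L2_add: "f \<in> L2 a b n \<Longrightarrow> g \<in> L2 a b n \<Longrightarrow> (\<lambda>x i. f x i + g x i) \<in> L2 a b n"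
  by (auto simp: L2_iff intro!: sq_add)

lemma L2_diff: "f \<in> L2 a b n \<Longrightarrow> g \<in> L2 a b n \<Longrightarrow> (\<lambda>x i. f x i - g x i) \<in> L2 a b n"
  by (auto simp: L2_iff intro!: sq_diff)

lemma L2_scale: "f \<in> L2 a b n \<Longrightarrow> (\<lambda>x i. r * f x i) \<in> L2 a b n"
  by (auto simp: L2_iff intro!: sq_scale)

lemma L2_zero: "(\<lambda>x i. 0) \<in> L2 a b n"
  by (auto simp: L2_iff sq_zero)

lemma L2_mv: "f \<in> L2 a b n \<Longrightarrow> (\<lambda>x. mv n M (f x)) \<in> L2 a b n"
  by (auto simp: L2_iff mv_def intro!: sq_sum sq_scale)

lemma dotk_mv_gen: "dotk n (mv n M u) v = (\<Sum>i<n. \<Sum>j<n. M i j * u j * v i)"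
  by (simp add: dotk_def mv_def sum_distrib_right)

lemma dotk_mv_gen2: "dotk n u (mv n M v) = (\<Sum>i<n. \<Sum>j<n. M j i * u j * v i)"
proof -
  have "dotk n u (mv n M v) = (\<Sum>j<n. \<Sum>i<n. M j i * u j * v i)"
    unfolding dotk_def mv_def
    by (intro sum.cong refl) (simp add: sum_distrib_left mult.commute mult.left_commute)
  also have "\<dots> = (\<Sum>i<n. \<Sum>j<n. M j i * u j * v i)" by (rule sum.swap)
  finally show ?thesis .
qed

lemma dotk_mv_sym: assumes "sym_mat n M" shows "dotk n (mv n M u) v = dotk n u (mv n M v)"
proof -
  have e: "\<And>i j. i \<in> {..<n} \<Longrightarrow> j \<in> {..<n} \<Longrightarrow> M i j * u j * v i = M j i * u j * v i"
    using assms unfolding sym_mat_def by (metis lessThan_iff)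
  show ?thesis unfolding dotk_mv_gen dotk_mv_gen2 by (intro sum.cong refl) (metis e)
qed

lemma dotk_mv_skew: "skew_mat n M \<Longrightarrow> dotk n (mv n M u) v = - dotk n u (mv n M v)"
proof -
  assume sk: "skew_mat n M"
  have "dotk n u (mv n M v) = (\<Sum>i<n. \<Sum>j<n. - (M i j * u j * v i))"
  proof -
    have e: "\<And>i j. i \<in> {..<n} \<Longrightarrow> j \<in> {..<n} \<Longrightarrow> M j i * u j * v i = - (M i j * u j * v i)"
      using sk unfolding skew_mat_def by (metis lessThan_iff mult_minus_left)
    show ?thesis unfolding dotk_mv_gen2 by (intro sum.cong refl) (simp add: e)
  qed
  also have "\<dots> = - dotk n (mv n M u) v"
    unfolding dotk_mv_gen by (simp add: sum_negf)
  finally show ?thesis by simp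
qed

lemma L2ip_mv_sym:
  assumes "sym_mat n M"
  shows "L2ip a b n (\<lambda>x. mv n M (f x)) h = L2ip a b n f (\<lambda>x. mv n M (h x))"
  using dotk_mv_sym[OF assms] unfolding L2ip_def dotk_def by simp

lemma L2ip_mv_skew:
  assumes "skew_mat n M"
  shows "L2ip a b n (\<lambda>x. mv n M (f x)) h = - L2ip a b n f (\<lambda>x. mv n M (h x))"
proof -
  have "L2ip a b n (\<lambda>x. mv n M (f x)) h = L2ip a b n (\<lambda>x i. (-1) * (f x i)) (\<lambda>x. mv n M (h x))"
    using dotk_mv_skew[OF assms] unfolding L2ip_def dotk_def by (simp add: sum_negf)
  then show ?thesis by (simp add: L2ip_eq sum_negf)
qed

lemma L2ip_self:
  assumes "f \<in> L2 a b n" "L2ip a b n f f = 0"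
  shows "AE x in NN a b. \<forall>i<n. f x i = 0"
proof -
  have "AE x in NN a b. (\<Sum>i<n. f x i * f x i) = 0"
    using assms(2) unfolding L2ip_eq
    by (subst (asm) integral_nonneg_eq_0_iff_AE[OF L2ip_int[OF assms(1) assms(1)]]) (auto intro!: sum_nonneg)
  then show ?thesis
    by eventually_elim (simp add: sum_nonneg_eq_0_iff)
qed

lemma LINT_a: "(LINT t:{a}|lborel. (f::real\<Rightarrow>real) t) = 0"
  unfolding set_lebesgue_integral_def
  by (rule integral_eq_zero_AE) (use AE_lborel_singleton[of a] in \<open>eventually_elim, auto simp: indicator_def\<close>)

lemma LINT_aa: "(LINT t:{a..a}|lborel. (f::real\<Rightarrow>real) t) = 0"
  by (subst atLeastAtMost_singleton) (rule LINT_a)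

lemma set_integral_sum_fin:
  fixes f :: "'i \<Rightarrow> real \<Rightarrow> real"
  assumes "\<And>j. j \<in> J \<Longrightarrow> set_integrable M A (f j)"
  shows "(LINT x:A|M. (\<Sum>j\<in>J. f j x)) = (\<Sum>j\<in>J. LINT x:A|M. f j x)"
  using assms unfolding set_lebesgue_integral_def set_integrable_def
  by (simp add: sum_distrib_left Bochner_Integration.integral_sum)

definition prim :: "real \<Rightarrow> real \<Rightarrow> nat \<Rightarrow> (real \<Rightarrow> nat \<Rightarrow> real) \<Rightarrow> (real \<Rightarrow> nat \<Rightarrow> real) \<Rightarrow> bool" where
  "prim a b n c g \<longleftrightarrow> g \<in> L2 a b n \<and> (\<forall>x i. n \<le> i \<longrightarrow> c x i = 0) \<and>
     (\<forall>x\<in>{a..b}. \<forall>i<n. c x i = c a i + (LINT t:{a..x}|lborel. g t i))"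


lemma L2_si: "g \<in> L2 a b n \<Longrightarrow> i < n \<Longrightarrow> set_integrable lborel {a..b} (\<lambda>x. g x i)"
  unfolding L2_iff si_iff using sq_int[OF NN_finite] by blast

lemma prim_eq: "prim a b n c g \<Longrightarrow> x \<in> {a..b} \<Longrightarrow> i < n \<Longrightarrow> c x i = c a i + (LINT t:{a..x}|lborel. g t i)"
  unfolding prim_def by blast

lemma prim_L2g: "prim a b n c g \<Longrightarrow> g \<in> L2 a b n"
  unfolding prim_def by blast

lemma prim_L2:
  assumes "prim a b n c g"
  shows "c \<in> L2 a b n"
  unfolding L2_iff
proof (intro conjI allI impI)
  show "\<And>x i. n \<le> i \<Longrightarrow> c x i = 0" using assms unfolding prim_def by blast
  fix i assume i: "i < n"
  have "continuous_on {a..b} (\<lambda>x. c a i + (LINT t:{a..x}|lborel. g t i))"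
    by (rule continuous_on_add[OF continuous_on_const indef_cont[OF L2_si[OF prim_L2g[OF assms] i]]])
  then have "continuous_on {a..b} (\<lambda>x. c x i)"
    by (rule continuous_on_eq) (metis prim_eq[OF assms _ i])
  then show "sq (NN a b) (\<lambda>x. c x i)" by (rule sq_cont)
qed

lemma prim_intro:
  assumes "g \<in> L2 a b n" "\<And>i. n \<le> i \<Longrightarrow> \<alpha> i = 0"
  shows "prim a b n (\<lambda>x i. \<alpha> i + (LINT t:{a..x}|lborel. g t i)) g"
  unfolding prim_def
proof (intro conjI allI impI ballI)
  show "g \<in> L2 a b n" by fact
  fix x i
  assume "n \<le> i"
  then have "\<And>t. g t i = 0" using assms(1) unfolding L2_iff by blast
  then show "\<alpha> i + (LINT t:{a..x}|lborel. g t i) = 0" using assms(2) \<open>n \<le> i\<close> by simp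
next
  fix x i
  show "\<alpha> i + (LINT t:{a..x}|lborel. g t i) = \<alpha> i + (LINT t:{a..a}|lborel. g t i) + (LINT t:{a..x}|lborel. g t i)"
    by (simp add: LINT_a)
qed

lemma scl:
  fixes g1 g2 k1 k2 :: "real \<Rightarrow> real"
  assumes ab: "a \<le> b" and i1: "set_integrable lborel {a..b} g1" and i2: "set_integrable lborel {a..b} g2"
    and k1: "\<forall>x\<in>{a..b}. k1 x = k1 a + (LINT t:{a..x}|lborel. g1 t)"
    and k2: "\<forall>x\<in>{a..b}. k2 x = k2 a + (LINT t:{a..x}|lborel. g2 t)"
  shows "integrable (NN a b) (\<lambda>x. g1 x * k2 x + k1 x * g2 x)"
    and "integral\<^sup>L (NN a b) (\<lambda>x. g1 x * k2 x + k1 x * g2 x) = k1 b * k2 b - k1 a * k2 a"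
proof -
  note I = ibp[OF i1 i2]
  define C1 where "C1 x = (LINT t:{a..x}|lborel. g1 t)" for x
  define C2 where "C2 x = (LINT t:{a..x}|lborel. g2 t)" for x
  have eq: "g1 x * k2 x + k1 x * g2 x = (k2 a * g1 x + k1 a * g2 x) + (g1 x * C2 x + C1 x * g2 x)"
    if x: "x \<in> {a..b}" for x
  proof -
    have "k1 x = k1 a + C1 x" "k2 x = k2 a + C2 x" using k1 k2 x unfolding C1_def C2_def by blast+
    then show ?thesis by (simp add: algebra_simps)
  qed
  have j1: "integrable (NN a b) (\<lambda>x. k2 a * g1 x + k1 a * g2 x)"
    using i1 i2 by (auto simp: si_iff)
  have j2: "integrable (NN a b) (\<lambda>x. g1 x * C2 x + C1 x * g2 x)"
    using I(1,2) by (auto simp: si_iff C1_def C2_def)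
  have int_eq: "integral\<^sup>L (NN a b) (\<lambda>x. g1 x * k2 x + k1 x * g2 x)
      = integral\<^sup>L (NN a b) (\<lambda>x. (k2 a * g1 x + k1 a * g2 x) + (g1 x * C2 x + C1 x * g2 x))"
    by (rule Bochner_Integration.integral_cong) (auto simp: eq)
  have "integrable (NN a b) (\<lambda>x. (k2 a * g1 x + k1 a * g2 x) + (g1 x * C2 x + C1 x * g2 x))"
    using j1 j2 by auto
  then show "integrable (NN a b) (\<lambda>x. g1 x * k2 x + k1 x * g2 x)"
    by (rule Bochner_Integration.integrable_cong[THEN iffD1, rotated 2]) (auto simp: eq)
  have G1: "integral\<^sup>L (NN a b) g1 = C1 b" and G2: "integral\<^sup>L (NN a b) g2 = C2 b"
    by (simp_all add: C1_def C2_def sl_eq)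
  have "integral\<^sup>L (NN a b) (\<lambda>x. g1 x * C2 x + C1 x * g2 x) = C1 b * C2 b"
    using I(1,2,3) by (simp add: sl_eq si_iff C1_def C2_def)
  moreover have "integral\<^sup>L (NN a b) (\<lambda>x. k2 a * g1 x + k1 a * g2 x) = k2 a * C1 b + k1 a * C2 b"
    using i1 i2 G1 G2 by (simp add: si_iff)
  ultimately have "integral\<^sup>L (NN a b) (\<lambda>x. g1 x * k2 x + k1 x * g2 x) = k2 a * C1 b + k1 a * C2 b + C1 b * C2 b"
    unfolding int_eq using j1 j2 by simp
  moreover have "k1 b = k1 a + C1 b" "k2 b = k2 a + C2 b"
    using bspec[OF k1, of b] bspec[OF k2, of b] ab unfolding C1_def C2_def by simp_all
  ultimately show "integral\<^sup>L (NN a b) (\<lambda>x. g1 x * k2 x + k1 x * g2 x) = k1 b * k2 b - k1 a * k2 a"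
    by (simp add: algebra_simps)
qed

lemma prim_ibp:
  assumes ab: "a \<le> b" and p1: "prim a b n c g" and p2: "prim a b n c' g'"
  shows "L2ip a b n g c' + L2ip a b n c g' = dotk n (c b) (c' b) - dotk n (c a) (c' a)"
proof -
  have S: "integrable (NN a b) (\<lambda>x. g x i * c' x i + c x i * g' x i)"
    and E: "integral\<^sup>L (NN a b) (\<lambda>x. g x i * c' x i + c x i * g' x i) = c b i * c' b i - c a i * c' a i"
    if i: "i < n" for i
  proof -
    have pc: "\<forall>x\<in>{a..b}. c x i = c a i + (LINT t:{a..x}|lborel. g t i)"
      using prim_eq[OF p1 _ i] by blast
    have pc': "\<forall>x\<in>{a..b}. c' x i = c' a i + (LINT t:{a..x}|lborel. g' t i)"
      using prim_eq[OF p2 _ i] by blast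
    note sc = scl[OF ab L2_si[OF prim_L2g[OF p1] i] L2_si[OF prim_L2g[OF p2] i] pc pc']
    show "integrable (NN a b) (\<lambda>x. g x i * c' x i + c x i * g' x i)" by (rule sc(1))
    show "integral\<^sup>L (NN a b) (\<lambda>x. g x i * c' x i + c x i * g' x i) = c b i * c' b i - c a i * c' a i"
      by (rule sc(2))
  qed
  have "L2ip a b n g c' + L2ip a b n c g'
      = integral\<^sup>L (NN a b) (\<lambda>x. \<Sum>i<n. g x i * c' x i + c x i * g' x i)"
    unfolding L2ip_eq sum.distrib
    by (rule Bochner_Integration.integral_add[symmetric]; rule L2ip_int;
        rule prim_L2g prim_L2; fact)
  also have "\<dots> = (\<Sum>i<n. c b i * c' b i - c a i * c' a i)"
    using S E by (simp add: Bochner_Integration.integral_sum)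
  finally show ?thesis by (simp add: dotk_def sum_subtractf)
qed

lemma prim_mv:
  assumes "prim a b n c g"
  shows "prim a b n (\<lambda>x. mv n M (c x)) (\<lambda>x. mv n M (g x))"
  unfolding prim_def
proof (intro conjI ballI allI impI)
  show "(\<lambda>x. mv n M (g x)) \<in> L2 a b n" using L2_mv[OF prim_L2g[OF assms]] .
  show "\<And>x i. n \<le> i \<Longrightarrow> mv n M (c x) i = 0" by (simp add: mv_def)
  fix x i assume x: "x \<in> {a..b}" and i: "i < n"
  have si: "set_integrable lborel {a..x} (\<lambda>t. g t j)" if "j < n" for j
    by (rule set_integrable_subset[OF L2_si[OF prim_L2g[OF assms] that]]) (use x in auto)
  have "(LINT t:{a..x}|lborel. mv n M (g t) i) = (LINT t:{a..x}|lborel. (\<Sum>j<n. M i j * g t j))"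
    using i by (simp add: mv_def)
  also have "\<dots> = (\<Sum>j<n. M i j * (LINT t:{a..x}|lborel. g t j))"
    by (subst set_integral_sum_fin) (auto intro!: si)
  finally have L: "(LINT t:{a..x}|lborel. mv n M (g t) i) = (\<Sum>j<n. M i j * (LINT t:{a..x}|lborel. g t j))" .
  have "mv n M (c x) i = (\<Sum>j<n. M i j * c x j)"
    using i by (simp add: mv_def)
  also have "\<dots> = (\<Sum>j<n. M i j * (c a j + (LINT t:{a..x}|lborel. g t j)))"
    by (rule sum.cong[OF refl]) (metis lessThan_iff prim_eq[OF assms x])
  also have "\<dots> = mv n M (c a) i + (\<Sum>j<n. M i j * (LINT t:{a..x}|lborel. g t j))"
    using i by (simp add: mv_def distrib_left sum.distrib)
  finally show "mv n M (c x) i = mv n M (c a) i + (LINT t:{a..x}|lborel. mv n M (g t) i)"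
    using L by simp
qed

lemma H1rep_prim: "H1rep a b n e c g \<Longrightarrow> prim a b n c g"
  unfolding H1rep_def prim_def by (elim conjE) (intro conjI; assumption)

lemma H1rep_AE:
  assumes "H1rep a b n e c g" shows "AE x in NN a b. \<forall>i<n. e x i = c x i"
proof -
  have "AE x in lborel. x \<in> {a..b} \<longrightarrow> e x = c x"
    using assms unfolding H1rep_def by (elim conjE)
  then show ?thesis unfolding AE_NN_iff by (rule eventually_mono) auto
qed




lemma mv_cong: "(\<And>j. j < n \<Longrightarrow> u j = v j) \<Longrightarrow> mv n M u = mv n M v"
  unfolding mv_def by (intro ext if_cong refl sum.cong) auto

lemma H1rep_L2: "H1rep a b n e c g \<Longrightarrow> e \<in> L2 a b n"
  unfolding H1rep_def by (elim conjE)

lemma CL: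
  assumes ab: "a \<le> b" and sP1: "sym_mat n P1" and sP0: "skew_mat n P0"
    and h1: "H1rep a b n e c g" and h2: "H1rep a b n e' c' g'"
  shows "L2ip a b n (\<lambda>x i. mv n P1 (g x) i + mv n P0 (e x) i) e'
       + L2ip a b n e (\<lambda>x i. mv n P1 (g' x) i + mv n P0 (e' x) i)
       = dotk n (c b) (mv n P1 (c' b)) - dotk n (c a) (mv n P1 (c' a))"
proof -
  have p1: "prim a b n c g" and p2: "prim a b n c' g'" using h1 h2 by (simp_all add: H1rep_prim)
  have eL: "e \<in> L2 a b n" and eL': "e' \<in> L2 a b n" using h1 h2 by (simp_all add: H1rep_L2)
  have gL: "g \<in> L2 a b n" and gL': "g' \<in> L2 a b n" using p1 p2 by (simp_all add: prim_L2g)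
  have cL: "c \<in> L2 a b n" and cL': "c' \<in> L2 a b n" using p1 p2 by (simp_all add: prim_L2)
  have s1: "L2ip a b n (\<lambda>x i. mv n P1 (g x) i + mv n P0 (e x) i) e'
      = L2ip a b n (\<lambda>x. mv n P1 (g x)) e' + L2ip a b n (\<lambda>x. mv n P0 (e x)) e'"
    using L2ip_add1[OF L2_mv[OF gL] L2_mv[OF eL] eL'] by simp
  have s2: "L2ip a b n e (\<lambda>x i. mv n P1 (g' x) i + mv n P0 (e' x) i)
      = L2ip a b n e (\<lambda>x. mv n P1 (g' x)) + L2ip a b n e (\<lambda>x. mv n P0 (e' x))"
    using L2ip_add1[OF L2_mv[OF gL'] L2_mv[OF eL'] eL] by (simp add: L2ip_comm[of a b n e])
  have s3: "L2ip a b n (\<lambda>x. mv n P1 (g x)) e' = L2ip a b n g (\<lambda>x. mv n P1 (e' x))"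
    by (rule L2ip_mv_sym[OF sP1])
  have s4: "L2ip a b n (\<lambda>x. mv n P0 (e x)) e' = - L2ip a b n e (\<lambda>x. mv n P0 (e' x))"
    by (rule L2ip_mv_skew[OF sP0])
  have s5: "L2ip a b n g (\<lambda>x. mv n P1 (e' x)) = L2ip a b n g (\<lambda>x. mv n P1 (c' x))"
  proof -
    have "L2ip a b n (\<lambda>x. mv n P1 (e' x)) g = L2ip a b n (\<lambda>x. mv n P1 (c' x)) g"
    proof (rule L2ip_congAE1[OF L2_mv[OF eL'] L2_mv[OF cL'] gL])
      show "AE x in NN a b. \<forall>i<n. mv n P1 (e' x) i = mv n P1 (c' x) i"
        using H1rep_AE[OF h2] by eventually_elim (metis mv_cong)
    qed
    then show ?thesis by (simp add: L2ip_comm[of a b n g])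
  qed
  have s6: "L2ip a b n e (\<lambda>x. mv n P1 (g' x)) = L2ip a b n c (\<lambda>x. mv n P1 (g' x))"
    by (rule L2ip_congAE1[OF eL cL L2_mv[OF gL'] H1rep_AE[OF h1]])
  have s7: "L2ip a b n g (\<lambda>x. mv n P1 (c' x)) + L2ip a b n c (\<lambda>x. mv n P1 (g' x))
      = dotk n (c b) (mv n P1 (c' b)) - dotk n (c a) (mv n P1 (c' a))"
    by (rule prim_ibp[OF ab p1 prim_mv[OF p2]])
  show ?thesis unfolding s1 s2 s3 s4 s5 s6 using s7 by simp
qed

lemma dotk_comm: "dotk n u v = dotk n v u"
  by (simp add: dotk_def mult.commute)

lemma dotk_sc: "dotk n (\<lambda>i. r * X i * s) (\<lambda>i. t * Y i) = (r * t * s) * dotk n X Y"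
  unfolding dotk_def by (simp add: sum_distrib_left mult_ac)

lemma mv_diff: "mv n M (\<lambda>k. u k - v k) = (\<lambda>i. mv n M u i - mv n M v i)"
  unfolding mv_def by (auto simp: algebra_simps sum_subtractf)

lemma dotk_diff_add: "dotk n (\<lambda>i. x i - y i) (\<lambda>i. z i + w i) = dotk n x z + dotk n x w - dotk n y z - dotk n y w"
  unfolding dotk_def by (simp add: algebra_simps sum.distrib sum_subtractf)

lemma BND:
  fixes u v u' v' :: "nat \<Rightarrow> real"
  assumes sP1: "sym_mat n P1"
  shows "dotk n (\<lambda>i. 1 / sqrt 2 * mv n P1 (\<lambda>k. u k - v k) i * dt) (\<lambda>i. 1 / sqrt 2 * (u' i + v' i))
       + dotk n (\<lambda>i. 1 / sqrt 2 * (u i + v i)) (\<lambda>i. 1 / sqrt 2 * mv n P1 (\<lambda>k. u' k - v' k) i * dt)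
       = dt * (dotk n u (mv n P1 u') - dotk n v (mv n P1 v'))"
proof -
  define B where "B x y = dotk n (mv n P1 x) y" for x y
  have Bs: "B x y = B y x" for x y
    unfolding B_def by (subst dotk_mv_sym[OF sP1]) (rule dotk_comm)
  have s2: "1 / sqrt 2 * (1 / sqrt 2) = (1/2::real)"
    by (simp add: divide_simps)
  have t1: "dotk n (\<lambda>i. 1 / sqrt 2 * mv n P1 (\<lambda>k. u k - v k) i * dt) (\<lambda>i. 1 / sqrt 2 * (u' i + v' i))
      = (dt/2) * (B u u' + B u v' - B v u' - B v v')"
    unfolding dotk_sc s2 mv_diff B_def dotk_diff_add by simp
  have t2: "dotk n (\<lambda>i. 1 / sqrt 2 * (u i + v i)) (\<lambda>i. 1 / sqrt 2 * mv n P1 (\<lambda>k. u' k - v' k) i * dt)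
      = (dt/2) * (B u' u + B u' v - B v' u - B v' v)"
    unfolding dotk_comm[of n "\<lambda>i. 1 / sqrt 2 * (u i + v i)"] dotk_sc s2 mv_diff B_def dotk_diff_add by simp
  have t3: "dotk n u (mv n P1 u') = B u' u" "dotk n v (mv n P1 v') = B v' v"
    unfolding B_def by (simp_all add: dotk_comm)
  show ?thesis unfolding t1 t2 t3 using Bs[of u u'] Bs[of u v'] Bs[of v u'] Bs[of v v']
    by (simp add: algebra_simps)
qed

lemma DA_elim:
  assumes "((dfe, dfw, dfd), (ee, ew, ed)) \<in> DA a b n dt P1 P0 H Hs"
  obtains c g where "dfe \<in> L2 a b n" "ee \<in> L2 a b n" "dfd \<in> Rvec n" "ed \<in> Rvec n" "H1rep a b n ee c g"
    "AE x in NN a b. \<forall>i<n. dfe x i = dt * (mv n P1 (g x) i + mv n P0 (ee x) i) + H dfw x i"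
    "dfd = (\<lambda>i. (1 / sqrt 2) * mv n P1 (\<lambda>k. c b k - c a k) i * dt)"
    "ed = (\<lambda>i. (1 / sqrt 2) * (c b i + c a i))" "ew = Hs ee"
proof -
  from assms obtain c g where A: "dfe \<in> L2 a b n" "ee \<in> L2 a b n" "dfd \<in> Rvec n" "ed \<in> Rvec n" "H1rep a b n ee c g"
    "AE x in lborel. x \<in> {a..b} \<longrightarrow>
           dfe x = (\<lambda>i. (mv n P1 (g x) i + mv n P0 (ee x) i) * dt + H dfw x i)"
    "dfd = (\<lambda>i. (1 / sqrt 2) * mv n P1 (\<lambda>k. c b k - c a k) i * dt)"
    "ed = (\<lambda>i. (1 / sqrt 2) * (c b i + c a i))" "ew = Hs ee"
    unfolding DA_def by blast
  have "AE x in NN a b. \<forall>i<n. dfe x i = dt * (mv n P1 (g x) i + mv n P0 (ee x) i) + H dfw x i"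
    unfolding AE_NN_iff using A(6) by (rule eventually_mono) (simp add: mult.commute)
  then show thesis using A by (intro that) auto
qed

lemma PA:
  assumes ab: "a \<le> b" and sP1: "sym_mat n P1" and sP0: "skew_mat n P0"
    and HL2: "\<And>z. H z \<in> L2 a b n" and adj: "is_adjoint a b n H Hs"
    and x: "((dfe, dfw, dfd), (ee, ew, ed)) \<in> DA a b n dt P1 P0 H Hs"
    and y: "((dfe', dfw', dfd'), (ee', ew', ed')) \<in> DA a b n dt P1 P0 H Hs"
  shows "L2ip a b n dfe ee' - inner dfw ew' + L2ip a b n ee dfe' - inner ew dfw'
       = dotk n dfd ed' + dotk n ed dfd'"
proof -
  obtain c g where X: "dfe \<in> L2 a b n" "ee \<in> L2 a b n" "dfd \<in> Rvec n" "ed \<in> Rvec n" "H1rep a b n ee c g"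
    "AE x in NN a b. \<forall>i<n. dfe x i = dt * (mv n P1 (g x) i + mv n P0 (ee x) i) + H dfw x i"
    "dfd = (\<lambda>i. (1 / sqrt 2) * mv n P1 (\<lambda>k. c b k - c a k) i * dt)"
    "ed = (\<lambda>i. (1 / sqrt 2) * (c b i + c a i))" "ew = Hs ee"
    by (rule DA_elim[OF x])
  obtain c' g' where Y: "dfe' \<in> L2 a b n" "ee' \<in> L2 a b n" "dfd' \<in> Rvec n" "ed' \<in> Rvec n" "H1rep a b n ee' c' g'"
    "AE x in NN a b. \<forall>i<n. dfe' x i = dt * (mv n P1 (g' x) i + mv n P0 (ee' x) i) + H dfw' x i"
    "dfd' = (\<lambda>i. (1 / sqrt 2) * mv n P1 (\<lambda>k. c' b k - c' a k) i * dt)"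
    "ed' = (\<lambda>i. (1 / sqrt 2) * (c' b i + c' a i))" "ew' = Hs ee'"
    by (rule DA_elim[OF y])
  have adj': "\<And>z f. f \<in> L2 a b n \<Longrightarrow> L2ip a b n (H z) f = inner z (Hs f)"
    using adj unfolding is_adjoint_def by auto
  define U where "U x i = mv n P1 (g x) i + mv n P0 (ee x) i" for x i
  define U' where "U' x i = mv n P1 (g' x) i + mv n P0 (ee' x) i" for x i
  have gL: "g \<in> L2 a b n" "g' \<in> L2 a b n"
    using prim_L2g[OF H1rep_prim[OF X(5)]] prim_L2g[OF H1rep_prim[OF Y(5)]] by auto
  have UL: "U \<in> L2 a b n" "U' \<in> L2 a b n"
    unfolding U_def U'_def using L2_add[OF L2_mv L2_mv] gL X(2) Y(2) by auto
  have e1: "L2ip a b n dfe ee' = dt * L2ip a b n U ee' + inner dfw ew'"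
  proof -
    have "L2ip a b n dfe ee' = L2ip a b n (\<lambda>x i. dt * U x i + H dfw x i) ee'"
      by (rule L2ip_congAE1[OF X(1) L2_add[OF L2_scale[OF UL(1)] HL2] Y(2)])
         (use X(6) in \<open>simp add: U_def\<close>)
    also have "\<dots> = dt * L2ip a b n U ee' + L2ip a b n (H dfw) ee'"
      using L2ip_add1[OF L2_scale[OF UL(1)] HL2 Y(2)] by (simp add: L2ip_scale1)
    finally show ?thesis using adj'[OF Y(2)] Y(9) by simp
  qed
  have e2: "L2ip a b n ee dfe' = dt * L2ip a b n ee U' + inner ew dfw'"
  proof -
    have "L2ip a b n dfe' ee = L2ip a b n (\<lambda>x i. dt * U' x i + H dfw' x i) ee"
      by (rule L2ip_congAE1[OF Y(1) L2_add[OF L2_scale[OF UL(2)] HL2] X(2)])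
         (use Y(6) in \<open>simp add: U'_def\<close>)
    also have "\<dots> = dt * L2ip a b n U' ee + L2ip a b n (H dfw') ee"
      using L2ip_add1[OF L2_scale[OF UL(2)] HL2 X(2)] by (simp add: L2ip_scale1)
    finally have "L2ip a b n dfe' ee = dt * L2ip a b n U' ee + inner dfw' ew"
      using adj'[OF X(2)] X(9) by simp
    then show ?thesis
      by (simp add: L2ip_comm[of a b n ee dfe'] L2ip_comm[of a b n ee U'] inner_commute[of ew dfw'])
  qed
  have cl: "L2ip a b n U ee' + L2ip a b n ee U' = dotk n (c b) (mv n P1 (c' b)) - dotk n (c a) (mv n P1 (c' a))"
    unfolding U_def U'_def using CL[OF ab sP1 sP0 X(5) Y(5)] by simp
  have bnd: "dotk n dfd ed' + dotk n ed dfd' = dt * (dotk n (c b) (mv n P1 (c' b)) - dotk n (c a) (mv n P1 (c' a)))"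
    unfolding X(7,8) Y(7,8) by (rule BND[OF sP1])
  show ?thesis unfolding e1 e2 bnd cl[symmetric] by (simp add: algebra_simps)
qed




lemma LINT_const: "a \<le> b \<Longrightarrow> (LINT t:{a..b}|lborel. (k::real)) = (b - a) * k"
  by (subst set_integral_const) (auto simp: emeasure_lborel_Icc_eq)

lemma LINT_zero: "(LINT t:A|lborel. (0::real)) = 0"
  by (simp add: set_lebesgue_integral_def)

lemma mv_inv:
  assumes AB: "\<forall>i<n. \<forall>j<n. (\<Sum>k<n. A i k * B k j) = (if i = j then 1 else 0)"
    and u: "\<And>i. n \<le> i \<Longrightarrow> u i = 0"
  shows "mv n A (mv n B u) = u"
proof
  fix i
  show "mv n A (mv n B u) i = u i"
  proof (cases "i < n")
    case True
    have "mv n A (mv n B u) i = (\<Sum>k<n. A i k * (\<Sum>j<n. B k j * u j))"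
      using True by (simp add: mv_def)
    also have "\<dots> = (\<Sum>k<n. \<Sum>j<n. A i k * B k j * u j)"
      by (simp add: sum_distrib_left mult.assoc)
    also have "\<dots> = (\<Sum>j<n. \<Sum>k<n. A i k * B k j * u j)"
      by (rule sum.swap)
    also have "\<dots> = (\<Sum>j<n. (\<Sum>k<n. A i k * B k j) * u j)"
      by (simp add: sum_distrib_right)
    also have "\<dots> = (\<Sum>j<n. (if i = j then u j else 0))"
      by (rule sum.cong[OF refl]) (use AB True in simp)
    also have "\<dots> = u i" using True by (simp add: sum.delta)
    finally show ?thesis .
  next
    case False
    then show ?thesis using u by (simp add: mv_def)
  qed
qed

lemma mv_scale: "mv n M (\<lambda>k. r * u k) = (\<lambda>i. r * mv n M u i)"
  unfolding mv_def by (auto simp: sum_distrib_left mult_ac)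

lemma mv_zero: "mv n M (\<lambda>k. 0) = (\<lambda>i. 0)"
  unfolding mv_def by auto

lemma dotk_zero1: "dotk n (\<lambda>i. 0) u = 0"
  unfolding dotk_def by simp

lemma dotk_zero2: "dotk n u (\<lambda>i. 0) = 0"
  unfolding dotk_def by simp

lemma dotk_neg1: "dotk n (\<lambda>i. - u i) v = - dotk n u v"
  unfolding dotk_def by (simp add: sum_negf)

lemma dotk_neg2: "dotk n v (\<lambda>i. - u i) = - dotk n v u"
  unfolding dotk_def by (simp add: sum_negf)

lemma join_Rvec: "join n p u v \<in> Rvec n"
  unfolding join_def Rvec_def by auto

lemma dotk_join:
  assumes "p \<le> n"
  shows "dotk n (join n p u v) (join n p u' v') = dotk (n - p) u u' + dotk p v v'"
proof -
  have U: "{..<n} = {..<n-p} \<union> {n-p..<n}" by auto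
  have "dotk n (join n p u v) (join n p u' v')
      = (\<Sum>i<n-p. join n p u v i * join n p u' v' i) + (\<Sum>i\<in>{n-p..<n}. join n p u v i * join n p u' v' i)"
    unfolding dotk_def U by (rule sum.union_disjoint) auto
  also have "(\<Sum>i<n-p. join n p u v i * join n p u' v' i) = dotk (n - p) u u'"
    unfolding dotk_def by (rule sum.cong[OF refl]) (simp add: join_def)
  also have "(\<Sum>i\<in>{n-p..<n}. join n p u v i * join n p u' v' i) = dotk p v v'"
  proof -
    have e: "{n-p..<n} = {0+(n-p)..<p+(n-p)}" using assms by simp
    show ?thesis unfolding e sum.shift_bounds_nat_ivl dotk_def atLeast0LessThan
      by (rule sum.cong[OF refl]) (use assms in \<open>auto simp: join_def\<close>)
  qed
  finally show ?thesis .
qed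

lemma join_split:
  assumes "p \<le> n" "u \<in> Rvec n"
  shows "join n p (\<lambda>i. if i < n - p then u i else 0) (\<lambda>i. if i < p then u (i + (n - p)) else 0) = u"
  using assms unfolding join_def Rvec_def by (auto simp: fun_eq_iff)

lemma L2_const: "(\<And>i. n \<le> i \<Longrightarrow> m i = 0) \<Longrightarrow> (\<lambda>x i. m i) \<in> L2 a b n"
  unfolding L2_iff by (auto intro!: sq_cont continuous_on_const)

lemma prim_const: "(\<And>i. n \<le> i \<Longrightarrow> m i = 0) \<Longrightarrow> prim a b n (\<lambda>x. m) (\<lambda>x i. 0)"
  unfolding prim_def by (auto simp: L2_zero LINT_zero)

lemma prim_intro0:
  assumes "g \<in> L2 a b n"
  shows "prim a b n (\<lambda>x i. LINT t:{a..x}|lborel. g t i) g"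
  using prim_intro[OF assms, of "\<lambda>i. 0"] by simp

lemma L2ip_zero2: "L2ip a b n f (\<lambda>x i. 0) = 0"
  unfolding L2ip_def by simp

lemma L2ip_zero1: "L2ip a b n (\<lambda>x i. 0) f = 0"
  unfolding L2ip_def by simp

lemma L2ip_neg1: "L2ip a b n (\<lambda>x i. - g x i) h = - L2ip a b n g h"
  by (simp add: L2ip_eq sum_negf)

lemma L2ip_diff2:
  assumes "f \<in> L2 a b n" "g \<in> L2 a b n" "h \<in> L2 a b n"
  shows "L2ip a b n h (\<lambda>x i. f x i - g x i) = L2ip a b n h f - L2ip a b n h g"
proof -
  have "L2ip a b n (\<lambda>x i. f x i + (-1) * g x i) h = L2ip a b n f h + L2ip a b n (\<lambda>x i. (-1) * g x i) h"
    by (rule L2ip_add1[OF assms(1) L2_scale[OF assms(2)] assms(3)])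
  then show ?thesis by (simp add: L2ip_neg1 L2ip_comm[of a b n h])
qed

lemma L2ip_add2:
  assumes "f \<in> L2 a b n" "g \<in> L2 a b n" "h \<in> L2 a b n"
  shows "L2ip a b n h (\<lambda>x i. f x i + g x i) = L2ip a b n h f + L2ip a b n h g"
  using L2ip_add1[OF assms] by (simp add: L2ip_comm[of a b n h])

lemma L2ip_scale2: "L2ip a b n h (\<lambda>x i. r * f x i) = r * L2ip a b n h f"
  using L2ip_scale1[of a b n r f h] by (simp add: L2ip_comm[of a b n h])

lemma L2ip_cong2:
  assumes "\<And>x i. x \<in> {a..b} \<Longrightarrow> i < n \<Longrightarrow> f x i = f' x i"
  shows "L2ip a b n h f = L2ip a b n h f'"
  using L2ip_cong1[of a b n f f' h, OF assms] by (simp add: L2ip_comm[of a b n h])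

lemma MKDA:
  assumes HL2: "\<And>z. H z \<in> L2 a b n" and pc: "prim a b n c g"
  shows "((\<lambda>x i. dt * (mv n P1 (g x) i + mv n P0 (c x) i) + H w x i, w,
            (\<lambda>i. 1 / sqrt 2 * mv n P1 (\<lambda>k. c b k - c a k) i * dt)),
          (c, Hs c, (\<lambda>i. 1 / sqrt 2 * (c b i + c a i)))) \<in> DA a b n dt P1 P0 H Hs"
proof -
  have cL: "c \<in> L2 a b n" using prim_L2[OF pc] .
  have gL: "g \<in> L2 a b n" using prim_L2g[OF pc] .
  have cz: "\<And>x i. n \<le> i \<Longrightarrow> c x i = 0" using pc unfolding prim_def by blast
  have dfe: "(\<lambda>x i. dt * (mv n P1 (g x) i + mv n P0 (c x) i) + H w x i) \<in> L2 a b n"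
    by (rule L2_add[OF L2_scale[OF L2_add[OF L2_mv[OF gL] L2_mv[OF cL]]] HL2])
  have pe: "\<forall>x\<in>{a..b}. \<forall>i<n. c x i = c a i + (LINT t:{a..x}|lborel. g t i)"
    using pc unfolding prim_def by blast
  have h1: "H1rep a b n c c g"
    unfolding H1rep_def
  proof (intro conjI)
    show "AE x in lborel. x \<in> {a..b} \<longrightarrow> c x = c x" by simp
    show "\<forall>x i. n \<le> i \<longrightarrow> c x i = 0" using cz by blast
  qed (fact cL gL pe)+
  have r1: "(\<lambda>i. 1 / sqrt 2 * mv n P1 (\<lambda>k. c b k - c a k) i * dt) \<in> Rvec n"
    unfolding Rvec_def by (simp add: mv_def)
  have r2: "(\<lambda>i. 1 / sqrt 2 * (c b i + c a i)) \<in> Rvec n"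
    unfolding Rvec_def by (simp add: cz)
  show ?thesis unfolding DA_def
    apply (simp only: mem_Collect_eq prod.case)
    apply (intro conjI dfe cL r1 r2)
    apply (rule exI[of _ c], rule exI[of _ g])
    using h1 by (auto simp: mult.commute)
qed

lemma MK:
  assumes HL2: "\<And>z. H z \<in> L2 a b n" and pc: "prim a b n c g"
    and F1: "F1 \<in> Rvec (n - p)" and E1: "E1 \<in> Rvec (n - p)" and fp: "fp \<in> Rvec p" and ep: "ep \<in> Rvec p"
    and DBm: "((fB, (\<lambda>i. - fp i)), (eB, ep)) \<in> DB"
    and jF: "join n p F1 fp = (\<lambda>i. 1 / sqrt 2 * mv n P1 (\<lambda>k. c b k - c a k) i * dt)"
    and jE: "join n p E1 ep = (\<lambda>i. 1 / sqrt 2 * (c b i + c a i))"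
  shows "((\<lambda>x i. dt * (mv n P1 (g x) i + mv n P0 (c x) i) + H w x i, w, F1, fB),
          (c, Hs c, E1, eB)) \<in> compAB a b n p dt P1 P0 H Hs DB"
proof -
  have "((\<lambda>x i. dt * (mv n P1 (g x) i + mv n P0 (c x) i) + H w x i, w,
            (\<lambda>i. 1 / sqrt 2 * mv n P1 (\<lambda>k. c b k - c a k) i * dt)),
          (c, Hs c, (\<lambda>i. 1 / sqrt 2 * (c b i + c a i)))) \<in> DA a b n dt P1 P0 H Hs"
    by (rule MKDA[OF HL2 pc])
  then show ?thesis
    apply (simp only: compAB_def mem_Collect_eq prod.case)
    apply (intro conjI F1 E1)
    apply (rule exI[of _ fp], rule exI[of _ ep])
    using fp ep DBm by (simp add: jF jE)
qed




lemma BS: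
  assumes ab: "a < b" and dt: "dt > 0"
    and Qi: "\<forall>i<n. \<forall>j<n. (\<Sum>k<n. P1 i k * Q k j) = (if i = j then 1 else 0)"
    and F: "F \<in> Rvec n" and E: "E \<in> Rvec n"
  obtains c g where "prim a b n c g"
    "(\<lambda>i. 1 / sqrt 2 * mv n P1 (\<lambda>k. c b k - c a k) i * dt) = F"
    "(\<lambda>i. 1 / sqrt 2 * (c b i + c a i)) = E"
proof -
  define D where "D i = sqrt 2 / dt * mv n Q F i" for i
  define \<beta> where "\<beta> i = D i / (b - a)" for i
  define \<alpha> where "\<alpha> i = (sqrt 2 * E i - D i) / 2" for i
  define g where "g = (\<lambda>(x::real) i. \<beta> i)"
  define c where "c = (\<lambda>x i. \<alpha> i + (LINT t:{a..x}|lborel. g t i))"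
  have Fz: "\<And>i. n \<le> i \<Longrightarrow> F i = 0" and Ez: "\<And>i. n \<le> i \<Longrightarrow> E i = 0"
    using F E unfolding Rvec_def by auto
  have Dz: "\<And>i. n \<le> i \<Longrightarrow> D i = 0" by (simp add: D_def mv_def)
  have gL: "g \<in> L2 a b n" unfolding g_def by (rule L2_const) (simp add: \<beta>_def Dz)
  have pc: "prim a b n c g" unfolding c_def by (rule prim_intro[OF gL]) (simp add: \<alpha>_def Dz Ez)
  have ca: "c a i = \<alpha> i" for i by (simp add: c_def LINT_a)
  have cb: "c b i = \<alpha> i + D i" for i
    using ab by (simp add: c_def g_def LINT_const \<beta>_def)
  have diff: "(\<lambda>k. c b k - c a k) = (\<lambda>k. sqrt 2 / dt * mv n Q F k)"
    by (simp add: ca cb D_def)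
  have "mv n P1 (\<lambda>k. c b k - c a k) = (\<lambda>i. sqrt 2 / dt * F i)"
    unfolding diff mv_scale by (simp add: mv_inv[OF Qi Fz])
  then have "(\<lambda>i. 1 / sqrt 2 * mv n P1 (\<lambda>k. c b k - c a k) i * dt) = F"
    using dt by (simp add: fun_eq_iff)
  moreover have "(\<lambda>i. 1 / sqrt 2 * (c b i + c a i)) = E"
    by (simp add: ca cb \<alpha>_def fun_eq_iff field_simps)
  ultimately show thesis using pc that by blast
qed




lemma dotk_self0: "dotk k d d = 0 \<Longrightarrow> i < k \<Longrightarrow> d i = 0"
  unfolding dotk_def by (simp add: sum_nonneg_eq_0_iff)

lemma Rvec_eqI:
  assumes "u \<in> Rvec k" "v \<in> Rvec k" "\<And>i. i < k \<Longrightarrow> u i = v i" shows "u = v"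
proof
  fix i show "u i = v i"
    using assms by (cases "i < k") (auto simp: Rvec_def)
qed

lemma dotk_diff2: "dotk k u v - dotk k u w = dotk k u (\<lambda>i. v i - w i)"
  unfolding dotk_def by (simp add: algebra_simps sum_subtractf)

lemma dotk_cut: "dotk k (\<lambda>i. if i < k then d i else 0) v = dotk k d v"
  unfolding dotk_def by simp

theorem proposition1:
  fixes a b dt :: real and n p :: nat
    and P1 P0 :: "nat \<Rightarrow> nat \<Rightarrow> real"
    and H :: "'z::{real_inner, complete_space} \<Rightarrow> real \<Rightarrow> nat \<Rightarrow> real"
    and Hs :: "(real \<Rightarrow> nat \<Rightarrow> real) \<Rightarrow> 'z"
    and j3 :: "'f::{real_inner, complete_space} \<Rightarrow> 'e::{real_inner, complete_space}"
    and DB :: "(('f \<times> (nat \<Rightarrow> real)) \<times> ('e \<times> (nat \<Rightarrow> real))) set"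
  assumes "a < b" and "1 \<le> p" and "p \<le> n"
    and "sym_mat n P1" and "invertible_mat n P1" and "skew_mat n P0"
    and "bounded_L2_map a b n H" and "is_adjoint a b n H Hs"
    and "dt > 0"
    and "linear j3" and "bij j3" and "\<forall>x y. inner (j3 x) (j3 y) = inner x y"
    and "dirac (bondB p) (pairB p j3) DB"
  shows "dirac (bondC a b n p) (pairC a b n p j3) (compAB a b n p dt P1 P0 H Hs DB)"
proof -
  note ab' = assms(1)
  have ab: "a \<le> b" using assms(1) by simp
  note pn = assms(3) and sP1 = assms(4) and sP0 = assms(6) and dtp = assms(9)
  have HL2: "\<And>z. H z \<in> L2 a b n" using assms(7) unfolding bounded_L2_map_def by blast
  have adj: "\<And>z f. f \<in> L2 a b n \<Longrightarrow> L2ip a b n (H z) f = inner z (Hs f)"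
    using assms(8) unfolding is_adjoint_def by auto
  obtain Q where Q: "\<forall>i<n. \<forall>j<n. (\<Sum>k<n. P1 i k * Q k j) = (if i = j then 1 else 0) \<and>
      (\<Sum>k<n. Q i k * P1 k j) = (if i = j then 1 else 0)"
    using assms(5) unfolding invertible_mat_def by blast
  have PQ: "\<forall>i<n. \<forall>j<n. (\<Sum>k<n. P1 i k * Q k j) = (if i = j then 1 else 0)" using Q by blast
  have QP: "\<forall>i<n. \<forall>j<n. (\<Sum>k<n. Q i k * P1 k j) = (if i = j then 1 else 0)" using Q by blast
  have DBsub: "DB \<subseteq> bondB p" and DBo: "orth (bondB p) (pairB p j3) DB = DB"
    using assms(13) unfolding dirac_def by auto
  have DBpair: "pairB p j3 x y = 0" if "x \<in> DB" "y \<in> DB" for x y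
    using that DBo unfolding orth_def by blast
  have DBin: "y \<in> DB" if "y \<in> bondB p" "\<forall>x\<in>DB. pairB p j3 x y = 0" for y
    using that DBo unfolding orth_def by blast
  have j0: "j3 0 = 0" using linear_0[OF assms(10)] .
  have ij0: "inv j3 0 = 0" using j0 assms(11) by (metis bij_def inv_f_f)
  have z0: "((0, \<lambda>i. 0), (0, \<lambda>i. 0)) \<in> DB"
  proof (rule DBin)
    show "((0, \<lambda>i. 0), (0, \<lambda>i. 0)) \<in> bondB p" unfolding bondB_def Rvec_def by simp
    show "\<forall>x\<in>DB. pairB p j3 x ((0, \<lambda>i. 0), (0, \<lambda>i. 0)) = 0"
      by (auto simp: pairB_def ij0 j0 dotk_zero2)
  qed
  have Hs0: "Hs (\<lambda>x i. 0) = 0"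
  proof -
    have "inner z (Hs (\<lambda>x i. 0)) = 0" for z
      using adj[OF L2_zero, of z] by (simp add: L2ip_zero2)
    then show ?thesis by (metis inner_eq_zero_iff)
  qed
  have pairC_eq: "pairC a b n p j3 ((dfe, dfw, dfnp, fB), (ee, ew, enp, eB)) ((dfe', dfw', dfnp', fB'), (ee', ew', enp', eB'))
      = L2ip a b n dfe ee' - inner dfw ew' - dotk (n - p) dfnp enp' + inner fB (inv j3 eB')
      + L2ip a b n ee dfe' - inner ew dfw' - dotk (n - p) enp dfnp' + inner eB (j3 fB')"
    for dfe dfw dfnp fB ee ew enp eB dfe' dfw' dfnp' fB' ee' ew' enp' eB'
    unfolding pairC_def by simp
  have pairB_eq: "pairB p j3 ((fB, f), (eB, e)) ((fB', f'), (eB', e'))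
      = inner fB (inv j3 eB') + inner eB (j3 fB') - dotk p f e' - dotk p e f'" for fB f eB e fB' f' eB' e'
    unfolding pairB_def by simp
  define D where "D = compAB a b n p dt P1 P0 H Hs DB"
  have sub: "D \<subseteq> bondC a b n p"
  proof
    fix x assume "x \<in> D"
    then show "x \<in> bondC a b n p"
      unfolding D_def compAB_def bondC_def DA_def by auto
  qed
  have fwd: "pairC a b n p j3 x y = 0" if xD: "x \<in> D" and yD: "y \<in> D" for x y
  proof -
    obtain dfe dfw dfnp fB ee ew enp eB where xe: "x = ((dfe, dfw, dfnp, fB), (ee, ew, enp, eB))"
      by (metis prod.collapse)
    obtain dfe' dfw' dfnp' fB' ee' ew' enp' eB' where ye: "y = ((dfe', dfw', dfnp', fB'), (ee', ew', enp', eB'))"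
      by (metis prod.collapse)
    obtain fp ep where X: "((dfe, dfw, join n p dfnp fp), (ee, ew, join n p enp ep)) \<in> DA a b n dt P1 P0 H Hs"
      "((fB, (\<lambda>i. - fp i)), (eB, ep)) \<in> DB"
      using xD unfolding xe D_def compAB_def by auto
    obtain fp' ep' where Y: "((dfe', dfw', join n p dfnp' fp'), (ee', ew', join n p enp' ep')) \<in> DA a b n dt P1 P0 H Hs"
      "((fB', (\<lambda>i. - fp' i)), (eB', ep')) \<in> DB"
      using yD unfolding ye D_def compAB_def by auto
    have pa: "L2ip a b n dfe ee' - inner dfw ew' + L2ip a b n ee dfe' - inner ew dfw'
        = dotk (n - p) dfnp enp' + dotk p fp ep' + (dotk (n - p) enp dfnp' + dotk p ep fp')"
      using PA[OF ab sP1 sP0 HL2 assms(8) X(1) Y(1)] by (simp add: dotk_join[OF pn])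
    have pb: "inner fB (inv j3 eB') + inner eB (j3 fB') + dotk p fp ep' + dotk p ep fp' = 0"
      using DBpair[OF X(2) Y(2)] by (simp add: pairB_eq dotk_neg1 dotk_neg2)
    show ?thesis unfolding xe ye pairC_eq using pa pb by linarith
  qed
  have bwd: "y \<in> D" if yo: "y \<in> orth (bondC a b n p) (pairC a b n p j3) D" for y
  proof -
    obtain dfe' dfw' dfnp' fB' ee' ew' enp' eB' where ye: "y = ((dfe', dfw', dfnp', fB'), (ee', ew', enp', eB'))"
      by (metis prod.collapse)
    have yB: "dfe' \<in> L2 a b n" "dfnp' \<in> Rvec (n - p)" "ee' \<in> L2 a b n" "enp' \<in> Rvec (n - p)"
      using yo unfolding ye orth_def bondC_def by auto
    have orthy: "pairC a b n p j3 x y = 0" if "x \<in> D" for x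
      using yo that unfolding orth_def by blast
    have z0': "((0, \<lambda>i. - (0::real)), (0, \<lambda>i. 0)) \<in> DB" using z0 by simp
    have R0: "(\<lambda>i. 0) \<in> Rvec k" for k unfolding Rvec_def by simp
    have join00: "join n p (\<lambda>i. 0) (\<lambda>i. 0) = (\<lambda>i. 0)" unfolding join_def by auto
        have ew'eq: "ew' = Hs ee'"
    proof -
      have c0: "prim a b n (\<lambda>x i. 0) (\<lambda>x i. 0)" using prim_const[of n "\<lambda>i. 0"] by simp
      have "inner z (Hs ee') - inner z ew' = 0" for z
      proof -
        have xD: "((\<lambda>x i. dt * (mv n P1 ((\<lambda>x i. 0) x) i + mv n P0 ((\<lambda>x i. 0) x) i) + H z x i, z, (\<lambda>i. 0), 0),
                   ((\<lambda>x i. 0), Hs (\<lambda>x i. 0), (\<lambda>i. 0), 0)) \<in> D"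
          unfolding D_def
          by (rule MK[OF HL2 c0 R0 R0 R0 R0 z0']) (simp_all add: join00 mv_zero)
        have "pairC a b n p j3 ((\<lambda>x i. dt * (mv n P1 ((\<lambda>x i. 0) x) i + mv n P0 ((\<lambda>x i. 0) x) i) + H z x i, z, (\<lambda>i. 0), 0),
                   ((\<lambda>x i. 0), Hs (\<lambda>x i. 0), (\<lambda>i. 0), 0)) y = 0"
          by (rule orthy[OF xD])
        then show ?thesis
          unfolding ye pairC_eq by (simp add: mv_zero dotk_zero1 L2ip_zero1 Hs0 adj[OF yB(3)])
      qed
      from this[of "Hs ee' - ew'"] show ?thesis by (simp add: inner_diff_right[symmetric])
    qed
        define v where "v = (\<lambda>x i. (1/dt) * (dfe' x i - H dfw' x i) - mv n P0 (ee' x) i)"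
    have vL: "v \<in> L2 a b n"
      unfolding v_def by (rule L2_diff[OF L2_scale[OF L2_diff[OF yB(1) HL2]] L2_mv[OF yB(3)]])
    define P1e where "P1e = (\<lambda>x. mv n P1 (ee' x))"
    have P1eL: "P1e \<in> L2 a b n" unfolding P1e_def by (rule L2_mv[OF yB(3)])
    define m where "m = (\<lambda>i. if i < n then (LINT x:{a..b}|lborel. P1e x i - (LINT t:{a..x}|lborel. v t i)) / (b - a) else 0)"
    define cc where "cc = (\<lambda>x i. m i + (LINT t:{a..x}|lborel. v t i))"
    have mz: "\<And>i. n \<le> i \<Longrightarrow> m i = 0" by (simp add: m_def)
    have pcc: "prim a b n cc v" unfolding cc_def by (rule prim_intro[OF vL mz])
    have ccL: "cc \<in> L2 a b n" using prim_L2[OF pcc] .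
    define gt where "gt = (\<lambda>x i. P1e x i - cc x i)"
    have gtL: "gt \<in> L2 a b n" unfolding gt_def by (rule L2_diff[OF P1eL ccL])
    define ct where "ct = (\<lambda>x i. LINT t:{a..x}|lborel. gt t i)"
    have pct: "prim a b n ct gt" unfolding ct_def by (rule prim_intro0[OF gtL])
    have ctL: "ct \<in> L2 a b n" using prim_L2[OF pct] .
    have ctz: "\<And>x i. n \<le> i \<Longrightarrow> ct x i = 0" using pct unfolding prim_def by blast
    have cta: "ct a = (\<lambda>i. 0)" by (simp add: ct_def LINT_a fun_eq_iff)
    have ctb: "ct b = (\<lambda>i. 0)"
    proof
      fix i show "ct b i = 0"
      proof (cases "i < n")
        case False then show ?thesis using ctz by simp
      next
        case True
        define K where "K = (\<lambda>x. LINT t:{a..x}|lborel. v t i)"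
        have iP: "set_integrable lborel {a..b} (\<lambda>x. P1e x i)" by (rule L2_si[OF P1eL True])
        have iC: "set_integrable lborel {a..b} (\<lambda>x. cc x i)" by (rule L2_si[OF ccL True])
        have iM: "set_integrable lborel {a..b} (\<lambda>x. m i)"
          using L2_si[OF L2_const[of n m a b, OF mz] True] by simp
        have Keq: "K = (\<lambda>x. cc x i - m i)" by (simp add: cc_def K_def)
        have iK: "set_integrable lborel {a..b} K" unfolding Keq by (rule set_integral_diff(1)[OF iC iM])
        have ccK: "(\<lambda>x. cc x i) = (\<lambda>x. m i + K x)" by (simp add: cc_def K_def)
        have mi: "m i = ((LINT x:{a..b}|lborel. P1e x i) - (LINT x:{a..b}|lborel. K x)) / (b - a)"
          using True set_integral_diff(2)[OF iP iK] by (simp add: m_def K_def)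
        have "ct b i = (LINT x:{a..b}|lborel. P1e x i - cc x i)" by (simp add: ct_def gt_def)
        also have "\<dots> = (LINT x:{a..b}|lborel. P1e x i) - (LINT x:{a..b}|lborel. cc x i)"
          by (rule set_integral_diff(2)[OF iP iC])
        also have "(LINT x:{a..b}|lborel. cc x i) = (b - a) * m i + (LINT x:{a..b}|lborel. K x)"
          unfolding ccK using set_integral_add(2)[OF iM iK] ab by (simp add: LINT_const)
        finally show ?thesis using ab' unfolding mi by (simp add: field_simps)
      qed
    qed
    define U where "U = (\<lambda>x i. mv n P1 (gt x) i + mv n P0 (ct x) i)"
    have UL: "U \<in> L2 a b n" unfolding U_def by (rule L2_add[OF L2_mv[OF gtL] L2_mv[OF ctL]])
    have xD1: "((\<lambda>x i. dt * (mv n P1 (gt x) i + mv n P0 (ct x) i) + H 0 x i, 0, (\<lambda>i. 0), 0),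
                (ct, Hs ct, (\<lambda>i. 0), 0)) \<in> D"
      unfolding D_def
      by (rule MK[OF HL2 pct R0 R0 R0 R0 z0']) (simp_all add: join00 mv_zero cta ctb)
    have eq0: "L2ip a b n (\<lambda>x i. dt * U x i + H 0 x i) ee' + L2ip a b n ct dfe' - inner (Hs ct) dfw' = 0"
      using orthy[OF xD1] unfolding ye pairC_eq U_def by (simp add: dotk_zero1)
    have e1: "L2ip a b n (\<lambda>x i. dt * U x i + H 0 x i) ee' = dt * L2ip a b n U ee'"
      using L2ip_add1[OF L2_scale[OF UL] HL2 yB(3)] adj[OF yB(3), of 0] by (simp add: L2ip_scale1)
    have e2: "L2ip a b n U ee' = L2ip a b n gt P1e - L2ip a b n ct (\<lambda>x. mv n P0 (ee' x))"
      using L2ip_add1[OF L2_mv[OF gtL, of P1] L2_mv[OF ctL, of P0] yB(3)]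
      unfolding U_def P1e_def by (simp add: L2ip_mv_sym[OF sP1] L2ip_mv_skew[OF sP0])
    have e3: "inner (Hs ct) dfw' = L2ip a b n ct (H dfw')"
      using adj[OF ctL, of dfw'] by (simp add: inner_commute L2ip_comm[of a b n ct "H dfw'"])
    have e4: "L2ip a b n ct dfe' - L2ip a b n ct (H dfw') = dt * (L2ip a b n ct v + L2ip a b n ct (\<lambda>x. mv n P0 (ee' x)))"
    proof -
      have "L2ip a b n ct dfe' - L2ip a b n ct (H dfw') = L2ip a b n ct (\<lambda>x i. dfe' x i - H dfw' x i)"
        by (rule L2ip_diff2[OF yB(1) HL2 ctL, symmetric])
      also have "\<dots> = L2ip a b n ct (\<lambda>x i. dt * (v x i + mv n P0 (ee' x) i))"
        by (rule L2ip_cong2) (use dtp in \<open>simp add: v_def field_simps\<close>)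
      also have "\<dots> = dt * L2ip a b n ct (\<lambda>x i. v x i + mv n P0 (ee' x) i)"
        by (rule L2ip_scale2)
      also have "L2ip a b n ct (\<lambda>x i. v x i + mv n P0 (ee' x) i) = L2ip a b n ct v + L2ip a b n ct (\<lambda>x. mv n P0 (ee' x))"
        by (rule L2ip_add2[OF vL L2_mv[OF yB(3)] ctL])
      finally show ?thesis .
    qed
    have "dt * (L2ip a b n gt P1e + L2ip a b n ct v) = 0"
      using eq0 unfolding e1 e2 e3 using e4 by (simp add: algebra_simps)
    then have s1: "L2ip a b n gt P1e + L2ip a b n ct v = 0" using dtp by simp
    have s2: "L2ip a b n gt cc + L2ip a b n ct v = 0"
      using prim_ibp[OF ab pct pcc] by (simp add: cta ctb dotk_zero1)
    have "L2ip a b n gt (\<lambda>x i. P1e x i - cc x i) = L2ip a b n gt P1e - L2ip a b n gt cc"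
      by (rule L2ip_diff2[OF P1eL ccL gtL])
    then have "L2ip a b n gt gt = 0" using s1 s2 unfolding gt_def[symmetric] by simp
    then have AEgt: "AE x in NN a b. \<forall>i<n. gt x i = 0" by (rule L2ip_self[OF gtL])
    define c' where "c' = (\<lambda>x. mv n Q (cc x))"
    define g' where "g' = (\<lambda>x. mv n Q (v x))"
    have pc': "prim a b n c' g'" unfolding c'_def g'_def by (rule prim_mv[OF pcc])
    have ee'z: "\<And>x i. n \<le> i \<Longrightarrow> ee' x i = 0" using yB(3) unfolding L2_iff by blast
    have dfe'z: "\<And>x i. n \<le> i \<Longrightarrow> dfe' x i = 0" using yB(1) unfolding L2_iff by blast
    have Hz: "\<And>z x i. n \<le> i \<Longrightarrow> H z x i = 0" using HL2 unfolding L2_iff by blast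
    have vz: "\<And>x i. n \<le> i \<Longrightarrow> v x i = 0" by (simp add: v_def dfe'z Hz mv_def)
    have AEe: "AE x in NN a b. ee' x = c' x"
      using AEgt
    proof eventually_elim
      case (elim x)
      have "ee' x = mv n Q (mv n P1 (ee' x))" by (rule mv_inv[OF QP ee'z, symmetric])
      also have "\<dots> = mv n Q (cc x)"
        by (rule mv_cong) (use elim in \<open>simp add: gt_def P1e_def\<close>)
      finally show ?case by (simp add: c'_def)
    qed
    have h1': "H1rep a b n ee' c' g'"
      unfolding H1rep_def
    proof (intro conjI)
      show "ee' \<in> L2 a b n" by (rule yB(3))
      show "g' \<in> L2 a b n" by (rule prim_L2g[OF pc'])
      show "\<forall>x i. n \<le> i \<longrightarrow> c' x i = 0" using pc' unfolding prim_def by blast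
      show "\<forall>x\<in>{a..b}. \<forall>i<n. c' x i = c' a i + (LINT t:{a..x}|lborel. g' t i)"
        using pc' unfolding prim_def by blast
      show "AE x in lborel. x \<in> {a..b} \<longrightarrow> ee' x = c' x" using AEe unfolding AE_NN_iff .
    qed
    have dfe'eq: "dfe' x = (\<lambda>i. (mv n P1 (g' x) i + mv n P0 (ee' x) i) * dt + H dfw' x i)" for x
    proof
      fix i
      have mvv: "mv n P1 (g' x) = v x" unfolding g'_def by (rule mv_inv[OF PQ vz])
      show "dfe' x i = (mv n P1 (g' x) i + mv n P0 (ee' x) i) * dt + H dfw' x i"
      proof (cases "i < n")
        case True then show ?thesis using dtp unfolding mvv by (simp add: v_def field_simps)
      next
        case False then show ?thesis unfolding mvv by (simp add: vz dfe'z Hz mv_def)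
      qed
    qed
    define dfdY where "dfdY = (\<lambda>i. 1 / sqrt 2 * mv n P1 (\<lambda>k. c' b k - c' a k) i * dt)"
    define edY where "edY = (\<lambda>i. 1 / sqrt 2 * (c' b i + c' a i))"
    have c'z: "\<And>x i. n \<le> i \<Longrightarrow> c' x i = 0" using pc' unfolding prim_def by blast
    have dfdYR: "dfdY \<in> Rvec n" unfolding dfdY_def Rvec_def by (simp add: mv_def)
    have edYR: "edY \<in> Rvec n" unfolding edY_def Rvec_def by (simp add: c'z)
    have yDA: "((dfe', dfw', dfdY), (ee', ew', edY)) \<in> DA a b n dt P1 P0 H Hs"
      unfolding DA_def
      apply (simp only: mem_Collect_eq prod.case)
      apply (intro conjI yB(1) yB(3) dfdYR edYR)
      apply (rule exI[of _ c'], rule exI[of _ g'])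
      using h1' dfe'eq ew'eq by (simp add: dfdY_def edY_def)
        define fpY where "fpY = (\<lambda>i. if i < p then dfdY (i + (n - p)) else 0)"
    define epY where "epY = (\<lambda>i. if i < p then edY (i + (n - p)) else 0)"
    define dfnpY where "dfnpY = (\<lambda>i. if i < n - p then dfdY i else 0)"
    define enpY where "enpY = (\<lambda>i. if i < n - p then edY i else 0)"
    have jd: "join n p dfnpY fpY = dfdY" unfolding dfnpY_def fpY_def by (rule join_split[OF pn dfdYR])
    have je: "join n p enpY epY = edY" unfolding enpY_def epY_def by (rule join_split[OF pn edYR])
    have RY: "fpY \<in> Rvec p" "epY \<in> Rvec p" "dfnpY \<in> Rvec (n - p)" "enpY \<in> Rvec (n - p)"
      unfolding fpY_def epY_def dfnpY_def enpY_def Rvec_def by auto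
    have T: "dotk n (join n p F1 fp) edY + dotk n (join n p E1 ep) dfdY - dotk (n - p) F1 enp'
        - dotk (n - p) E1 dfnp' + inner fB (inv j3 eB') + inner eB (j3 fB') = 0"
      if pc: "prim a b n c g" and F1: "F1 \<in> Rvec (n - p)" and E1: "E1 \<in> Rvec (n - p)"
        and fp: "fp \<in> Rvec p" and ep: "ep \<in> Rvec p"
        and DBm: "((fB, (\<lambda>i. - fp i)), (eB, ep)) \<in> DB"
        and jF: "join n p F1 fp = (\<lambda>i. 1 / sqrt 2 * mv n P1 (\<lambda>k. c b k - c a k) i * dt)"
        and jE: "join n p E1 ep = (\<lambda>i. 1 / sqrt 2 * (c b i + c a i))"
      for c g F1 E1 fp ep fB eB
    proof -
      have xD: "((\<lambda>x i. dt * (mv n P1 (g x) i + mv n P0 (c x) i) + H 0 x i, 0, F1, fB), (c, Hs c, E1, eB)) \<in> D"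
        unfolding D_def by (rule MK[OF HL2 pc F1 E1 fp ep DBm jF jE])
      have xDA: "((\<lambda>x i. dt * (mv n P1 (g x) i + mv n P0 (c x) i) + H 0 x i, 0,
            (\<lambda>i. 1 / sqrt 2 * mv n P1 (\<lambda>k. c b k - c a k) i * dt)),
          (c, Hs c, (\<lambda>i. 1 / sqrt 2 * (c b i + c a i)))) \<in> DA a b n dt P1 P0 H Hs"
        by (rule MKDA[OF HL2 pc])
      note pa = PA[OF ab sP1 sP0 HL2 assms(8) xDA yDA, folded jF jE]
      show ?thesis using orthy[OF xD] pa unfolding ye pairC_eq by simp
    qed
    have S1: "dotk (n - p) F1 (\<lambda>i. enpY i - enp' i) + dotk (n - p) E1 (\<lambda>i. dfnpY i - dfnp' i) = 0"
      if F1: "F1 \<in> Rvec (n - p)" and E1: "E1 \<in> Rvec (n - p)" for F1 E1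
    proof -
      obtain c g where pc: "prim a b n c g"
        and jF: "(\<lambda>i. 1 / sqrt 2 * mv n P1 (\<lambda>k. c b k - c a k) i * dt) = join n p F1 (\<lambda>i. 0)"
        and jE: "(\<lambda>i. 1 / sqrt 2 * (c b i + c a i)) = join n p E1 (\<lambda>i. 0)"
        by (rule BS[OF ab' dtp PQ join_Rvec join_Rvec])
      have "dotk n (join n p F1 (\<lambda>i. 0)) edY + dotk n (join n p E1 (\<lambda>i. 0)) dfdY - dotk (n - p) F1 enp'
        - dotk (n - p) E1 dfnp' + inner 0 (inv j3 eB') + inner 0 (j3 fB') = 0"
        by (rule T[OF pc F1 E1 R0 R0 z0' jF[symmetric] jE[symmetric]])
      then show ?thesis
        unfolding je[symmetric] jd[symmetric] dotk_join[OF pn]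
        by (simp add: dotk_zero1 dotk_diff2[symmetric])
    qed
    have enp'eq: "enp' = enpY"
    proof (rule Rvec_eqI[OF yB(4) RY(4)])
      fix i assume i: "i < n - p"
      have "dotk (n - p) (\<lambda>i. enpY i - enp' i) (\<lambda>i. enpY i - enp' i) = 0"
        using S1[of "\<lambda>i. if i < n - p then enpY i - enp' i else 0" "\<lambda>i. 0"]
        by (simp add: Rvec_def dotk_cut dotk_zero1)
      from dotk_self0[OF this i] show "enp' i = enpY i" by simp
    qed
    have dfnp'eq: "dfnp' = dfnpY"
    proof (rule Rvec_eqI[OF yB(2) RY(3)])
      fix i assume i: "i < n - p"
      have "dotk (n - p) (\<lambda>i. dfnpY i - dfnp' i) (\<lambda>i. dfnpY i - dfnp' i) = 0"
        using S1[of "\<lambda>i. 0" "\<lambda>i. if i < n - p then dfnpY i - dfnp' i else 0"]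
        by (simp add: Rvec_def dotk_cut dotk_zero1)
      from dotk_self0[OF this i] show "dfnp' i = dfnpY i" by simp
    qed
    have DBy: "((fB', (\<lambda>i. - fpY i)), (eB', epY)) \<in> DB"
    proof (rule DBin)
      show "((fB', (\<lambda>i. - fpY i)), (eB', epY)) \<in> bondB p"
        using RY unfolding bondB_def Rvec_def by auto
      show "\<forall>x\<in>DB. pairB p j3 x ((fB', (\<lambda>i. - fpY i)), (eB', epY)) = 0"
      proof
        fix d assume dDB: "d \<in> DB"
        obtain fB f eB e where de: "d = ((fB, f), (eB, e))" by (metis prod.collapse)
        have fe: "f \<in> Rvec p" "e \<in> Rvec p" using dDB DBsub unfolding de bondB_def by auto
        have fn: "(\<lambda>i. - f i) \<in> Rvec p" using fe(1) unfolding Rvec_def by auto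
        have DBm: "((fB, (\<lambda>i. - (- f i))), (eB, e)) \<in> DB" using dDB unfolding de by simp
        obtain c g where pc: "prim a b n c g"
          and jF: "(\<lambda>i. 1 / sqrt 2 * mv n P1 (\<lambda>k. c b k - c a k) i * dt) = join n p (\<lambda>i. 0) (\<lambda>i. - f i)"
          and jE: "(\<lambda>i. 1 / sqrt 2 * (c b i + c a i)) = join n p (\<lambda>i. 0) e"
          by (rule BS[OF ab' dtp PQ join_Rvec join_Rvec])
        have "dotk n (join n p (\<lambda>i. 0) (\<lambda>i. - f i)) edY + dotk n (join n p (\<lambda>i. 0) e) dfdY - dotk (n - p) (\<lambda>i. 0) enp'
          - dotk (n - p) (\<lambda>i. 0) dfnp' + inner fB (inv j3 eB') + inner eB (j3 fB') = 0"
          by (rule T[OF pc R0 R0 fn fe(2) DBm jF[symmetric] jE[symmetric]])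
        then show "pairB p j3 d ((fB', (\<lambda>i. - fpY i)), (eB', epY)) = 0"
          unfolding de pairB_eq je[symmetric] jd[symmetric] dotk_join[OF pn]
          by (simp add: dotk_zero1 dotk_neg1 dotk_neg2)
      qed
    qed
    show "y \<in> D"
      unfolding ye D_def compAB_def
      apply (simp only: mem_Collect_eq prod.case)
      apply (intro conjI yB(2) yB(4))
      apply (rule exI[of _ fpY], rule exI[of _ epY])
      using RY DBy yDA by (simp add: dfnp'eq enp'eq jd je)
  qed
  show ?thesis unfolding dirac_def D_def[symmetric]
  proof (intro conjI sub equalityI subsetI)
    fix y assume "y \<in> orth (bondC a b n p) (pairC a b n p j3) D"
    then show "y \<in> D" by (rule bwd)
  next
    fix y assume "y \<in> D"
    then show "y \<in> orth (bondC a b n p) (pairC a b n p j3) D"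
      unfolding orth_def using sub fwd by blast
  qed
qed


end
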